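(* For every real $u>0$, $$u\sum_{p\ge 3}\frac{\log p}{(p-2)p^u}\le 1,$$ where the sum is over primes $p\ge3$. *)

theory Defs
  imports "HOL-Analysis.Analysis" "HOL-Computational_Algebra.Primes"
begin

end

theory Submission
  imports Defs "HOL-Real_Asymp.Real_Asymp"
begin


lemma exp_lower_taylor5:
  fixes x :: real assumes "0 \<le> x"
  shows "1 + x + x^2/2 + x^3/6 + x^4/24 + x^5/120 \<le> exp x"
proof -
  obtain t where t: "\<bar>t\<bar> \<le> \<bar>x\<bar>" and e: "exp x = (\<Sum>m<6. (x ^ m) / fact m) + (exp t / fact 6) * x ^ 6"
    using Maclaurin_exp_le[of x 6] by blast
  have "0 \<le> (exp t / fact 6) * x ^ 6" using assms by simp
  moreover have "(\<Sum>m<6. (x ^ m) / fact m) = 1 + x + x^2/2 + x^3/6 + x^4/24 + x^5/120"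
    by (simp add: numeral_eq_Suc fact_numeral)
  ultimately show ?thesis using e by linarith
qed

lemma exp_upper_neg:
  fixes y :: real assumes "0 \<le> y"
  shows "1 - y + y^2/2 - y^3/6 \<le> exp (-y)"
proof -
  obtain t where t: "\<bar>t\<bar> \<le> \<bar>-y\<bar>" and e: "exp (-y) = (\<Sum>m<4. ((-y) ^ m) / fact m) + (exp t / fact 4) * (-y) ^ 4"
    using Maclaurin_exp_le[of "-y" 4] by blast
  have "0 \<le> (exp t / fact 4) * (-y) ^ 4" by simp
  moreover have "(\<Sum>m<4. ((-y) ^ m) / fact m) = 1 - y + y^2/2 - y^3/6"
    by (simp add: numeral_eq_Suc fact_numeral)
  ultimately show ?thesis using e by linarith
qed

lemma ln_le_by:
  fixes c y :: real and k :: nat assumes "0 < c" "0 \<le> y"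
    "c \<le> (1 + y + y^2/2 + y^3/6 + y^4/24 + y^5/120) ^ k"
  shows "ln c \<le> k * y"
proof (cases "k = 0")
  case True then show ?thesis using assms by simp
next
  case False
  have "exp (k*y) = exp y ^ k" by (simp add: exp_of_nat_mult[symmetric])
  moreover have "(1 + y + y^2/2 + y^3/6 + y^4/24 + y^5/120) ^ k \<le> exp y ^ k"
    using exp_lower_taylor5[of y] assms by (intro power_mono) auto
  ultimately have "c \<le> exp (k*y)" using assms by linarith
  then show ?thesis using assms by (metis exp_le_cancel_iff exp_ln)
qed

lemma ln_ge_by:
  fixes c y :: real and k :: nat assumes "0 \<le> y"
    "0 < 1 - y + y^2/2 - y^3/6"
    "(1 / (1 - y + y^2/2 - y^3/6)) ^ k \<le> c"
  shows "k * y \<le> ln c"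
proof -
  have "exp (k*y) = (1 / exp (-y)) ^ k" by (simp add: exp_of_nat_mult exp_minus inverse_eq_divide)
  moreover have "1 / exp (-y) \<le> 1 / (1 - y + y^2/2 - y^3/6)"
    using exp_upper_neg[of y] assms by (intro divide_left_mono) auto
  ultimately have "exp (k*y) \<le> (1 / (1 - y + y^2/2 - y^3/6)) ^ k"
    by (simp add: power_mono)
  then have "exp (k*y) \<le> c" using assms by linarith
  moreover have "0 < c" using calculation by (smt (verit) exp_gt_zero)
  ultimately show ?thesis by (metis exp_le_cancel_iff exp_ln)
qed

lemma ln3_up: "ln (3::real) \<le> 1.0988"
proof -
  have "(3::real) \<le> (1 + 0.13735 + 0.13735^2/2 + 0.13735^3/6 + 0.13735^4/24 + 0.13735^5/120) ^ 8" by (simp add: power_divide)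
  from ln_le_by[OF _ _ this] show ?thesis by simp
qed

lemma ln5_up: "ln (5::real) \<le> 1.6096"
proof -
  have "(5::real) \<le> (1 + 0.2012 + 0.2012^2/2 + 0.2012^3/6 + 0.2012^4/24 + 0.2012^5/120) ^ 8" by (simp add: power_divide)
  from ln_le_by[OF _ _ this] show ?thesis by simp
qed

lemma ln7_up: "ln (7::real) \<le> 1.9461"
proof -
  have "(7::real) \<le> (1 + 0.2432625 + 0.2432625^2/2 + 0.2432625^3/6 + 0.2432625^4/24 + 0.2432625^5/120) ^ 8" by (simp add: power_divide)
  from ln_le_by[OF _ _ this] show ?thesis by simp
qed

lemma ln11_up: "ln (11::real) \<le> 2.398"
proof -
  have "(11::real) \<le> (1 + 0.29975 + 0.29975^2/2 + 0.29975^3/6 + 0.29975^4/24 + 0.29975^5/120) ^ 8" by (simp add: power_divide)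
  from ln_le_by[OF _ _ this] show ?thesis by simp
qed

lemma ln13_up: "ln (13::real) \<le> 2.5651"
proof -
  have "(13::real) \<le> (1 + 0.3206375 + 0.3206375^2/2 + 0.3206375^3/6 + 0.3206375^4/24 + 0.3206375^5/120) ^ 8" by (simp add: power_divide)
  from ln_le_by[OF _ _ this] show ?thesis by simp
qed

lemma ln17_up: "ln (17::real) \<le> 2.8334"
proof -
  have "(17::real) \<le> (1 + 0.354175 + 0.354175^2/2 + 0.354175^3/6 + 0.354175^4/24 + 0.354175^5/120) ^ 8" by (simp add: power_divide)
  from ln_le_by[OF _ _ this] show ?thesis by simp
qed

lemma ln19_up: "ln (19::real) \<le> 2.9446"
proof -
  have "(19::real) \<le> (1 + 0.368075 + 0.368075^2/2 + 0.368075^3/6 + 0.368075^4/24 + 0.368075^5/120) ^ 8" by (simp add: power_divide)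
  from ln_le_by[OF _ _ this] show ?thesis by simp
qed

lemma ln23_up: "ln (23::real) \<le> 3.1356"
proof -
  have "(23::real) \<le> (1 + 0.39195 + 0.39195^2/2 + 0.39195^3/6 + 0.39195^4/24 + 0.39195^5/120) ^ 8" by (simp add: power_divide)
  from ln_le_by[OF _ _ this] show ?thesis by simp
qed

lemma ln29_up: "ln (29::real) \<le> 3.3674"
proof -
  have "(29::real) \<le> (1 + 0.420925 + 0.420925^2/2 + 0.420925^3/6 + 0.420925^4/24 + 0.420925^5/120) ^ 8" by (simp add: power_divide)
  from ln_le_by[OF _ _ this] show ?thesis by simp
qed

lemma ln31_up: "ln (31::real) \<le> 3.4341"
proof -
  have "(31::real) \<le> (1 + 0.4292625 + 0.4292625^2/2 + 0.4292625^3/6 + 0.4292625^4/24 + 0.4292625^5/120) ^ 8" by (simp add: power_divide)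
  from ln_le_by[OF _ _ this] show ?thesis by simp
qed

lemma ln3_lo: "1.098 \<le> ln (3::real)"
proof -
  have "(1 / (1 - 0.13725 + 0.13725^2/2 - 0.13725^3/6)) ^ 8 \<le> (3::real)" by (simp add: power_divide)
  from ln_ge_by[OF _ _ this] show ?thesis by (simp add: power_divide)
qed



definition ww :: "real \<Rightarrow> real \<Rightarrow> real" where "ww u x = x powr (-u - 1)"
definition HH :: "real \<Rightarrow> real \<Rightarrow> real" where "HH u x = x powr (-u) / u"
definition FL :: "real \<Rightarrow> real \<Rightarrow> real" where "FL u x = x powr (-u) * (u * ln x + 1) / u^2"
definition zt :: "real \<Rightarrow> nat \<Rightarrow> real" where "zt u j = ww u (2*real j+1)"
definition lt :: "real \<Rightarrow> nat \<Rightarrow> real" where "lt u j = ln (2*real j+1) * ww u (2*real j+1)"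

lemma HH_deriv:
  assumes "u > 0" "x > 0"
  shows "(HH u has_real_derivative - ww u x) (at x)"
proof -
  have "((\<lambda>x. x powr (-u) / u) has_real_derivative ((-u) * x powr (-u - 1)) / u) (at x)"
    using DERIV_cdivide[OF has_real_derivative_powr[OF \<open>x>0\<close>, of "-u"], of u] by simp
  moreover have "((-u) * x powr (-u - 1)) / u = - ww u x"
    using assms by (simp add: ww_def)
  ultimately show ?thesis unfolding HH_def by simp
qed

lemma FL_deriv:
  assumes "u > 0" "x > 0"
  shows "(FL u has_real_derivative - (ln x * ww u x)) (at x)"
proof -
  have p: "((\<lambda>x. x powr (-u)) has_real_derivative (-u) * x powr (-u-1)) (at x)"
    by (rule has_real_derivative_powr[OF \<open>x>0\<close>])
  have q: "((\<lambda>x. u * ln x + 1) has_real_derivative u * (1/x)) (at x)"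
    using assms by (auto intro!: derivative_eq_intros)
  have "((\<lambda>x. x powr (-u) * (u * ln x + 1) / u^2) has_real_derivative
      (x powr (-u) * (u * (1/x)) + (-u) * x powr (-u-1) * (u * ln x + 1)) / u^2) (at x)"
    using DERIV_cdivide[OF DERIV_mult[OF p q], of "u^2"] by (simp add: mult.commute)
  moreover have "x powr (-u) * (1/x) = x powr (-u - 1)"
    using assms by (simp add: powr_diff divide_inverse)
  then have "(x powr (-u) * (u * (1/x)) + (-u) * x powr (-u-1) * (u * ln x + 1)) / u^2 = - (ln x * ww u x)"
    using assms by (simp add: ww_def field_simps power2_eq_square)
  ultimately show ?thesis unfolding FL_def by simp
qed

lemma ww_anti: assumes "0 < x" "x \<le> y" "u > 0" shows "ww u y \<le> ww u x"
  unfolding ww_def using assms by (intro powr_mono2') auto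

lemma ww_pos: "0 < x \<Longrightarrow> 0 < ww u x" by (simp add: ww_def)

lemma lw_anti:
  assumes "3 \<le> x" "x \<le> y" "u > 0"
  shows "ln y * ww u y \<le> ln x * ww u x"
proof -
  define r where "r = y / x"
  have x0: "x > 0" using assms by simp
  have r1: "r \<ge> 1" using assms by (simp add: r_def)
  have y: "y = x * r" using x0 by (simp add: r_def)
  have lx: "ln x \<ge> 1"
  proof -
    have "ln x \<ge> ln 3" using assms by simp
    moreover have "ln (3::real) > 1" by (rule ln3_gt_1)
    ultimately show ?thesis by simp
  qed
  have "ln y = ln x + ln r" using x0 r1 y by (simp add: ln_mult)
  also have "\<dots> \<le> ln x + ln x * (r - 1)"
  proof -
    have "ln r \<le> r - 1" using ln_le_minus_one[of r] r1 by simp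
    moreover have "1 * (r - 1) \<le> ln x * (r - 1)" using lx r1 by (intro mult_right_mono) auto
    ultimately show ?thesis by simp
  qed
  also have "\<dots> = ln x * r" by (simp add: algebra_simps)
  also have "\<dots> \<le> ln x * r powr (1+u)"
  proof -
    have "r = r powr 1" using r1 by simp
    also have "\<dots> \<le> r powr (1+u)" using r1 assms by (intro powr_mono) auto
    finally show ?thesis using lx by simp
  qed
  finally have "ln y \<le> ln x * r powr (1+u)" .
  then have "ln y * ww u y \<le> ln x * r powr (1+u) * ww u y"
    using ww_pos[of y u] x0 r1 y by (intro mult_right_mono) auto
  then have "ln y * ww u y \<le> ln x * (r powr (1+u) * ww u y)" by (simp add: mult.assoc)
  also have "r powr (1+u) * ww u y = ww u x"
  proof -
    have "r powr (1+u) * r powr (-u-1) = r powr ((1+u) + (-u-1))" by (rule powr_add[symmetric])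
    then have e: "r powr (1+u) * r powr (-u-1) = 1" using r1 by simp
    have "r powr (1+u) * ww u y = (r powr (1+u) * r powr (-u-1)) * x powr (-u-1)"
      unfolding ww_def y by (simp add: powr_mult)
    then show ?thesis using e by (simp add: ww_def)
  qed
  finally show ?thesis .
qed

lemma HH_step:
  assumes "u > 0" "a > 0"
  shows "2 * ww u (a+2) \<le> HH u a - HH u (a+2)" "HH u a - HH u (a+2) \<le> 2 * ww u a"
proof -
  obtain z where z: "a < z" "z < a+2" "HH u (a+2) - HH u a = ((a+2) - a) * (- ww u z)"
    using MVT2[of a "a+2" "HH u" "\<lambda>x. - ww u x"] HH_deriv assms by force
  have "ww u (a+2) \<le> ww u z" "ww u z \<le> ww u a"
    using z assms by (auto intro!: ww_anti)
  then show "2 * ww u (a+2) \<le> HH u a - HH u (a+2)" "HH u a - HH u (a+2) \<le> 2 * ww u a"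
    using z by auto
qed

lemma FL_step:
  assumes "u > 0" "a \<ge> 3"
  shows "2 * (ln (a+2) * ww u (a+2)) \<le> FL u a - FL u (a+2)"
proof -
  obtain z where z: "a < z" "z < a+2" "FL u (a+2) - FL u a = ((a+2) - a) * (- (ln z * ww u z))"
    using MVT2[of a "a+2" "FL u" "\<lambda>x. - (ln x * ww u x)"] FL_deriv assms by force
  have "ln (a+2) * ww u (a+2) \<le> ln z * ww u z"
    using z assms by (intro lw_anti) auto
  then show ?thesis using z by auto
qed

lemma HH_nonneg: "u > 0 \<Longrightarrow> 0 \<le> HH u x" by (simp add: HH_def)
lemma FL_nonneg: "u > 0 \<Longrightarrow> x \<ge> 1 \<Longrightarrow> 0 \<le> FL u x" by (simp add: FL_def)

lemma tele_le:
  fixes a b :: "nat \<Rightarrow> real"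
  assumes "\<And>j. J \<le> j \<Longrightarrow> a j \<le> b j - b (Suc j)" "J \<le> M"
  shows "sum a {..<M} \<le> sum a {..<J} + b J - b M"
  using assms(2)
proof (induction M)
  case 0 then show ?case by simp
next
  case (Suc M)
  show ?case
  proof (cases "J = Suc M")
    case True then show ?thesis by simp
  next
    case False
    then have "J \<le> M" using Suc by simp
    then show ?thesis using Suc assms(1)[of M] by simp
  qed
qed

lemma tele_ge:
  fixes a b :: "nat \<Rightarrow> real"
  assumes "\<And>j. J \<le> j \<Longrightarrow> a j \<ge> b j - b (Suc j)" "J \<le> M"
  shows "sum a {..<M} \<ge> sum a {..<J} + b J - b M"
proof -
  have "\<And>j. J \<le> j \<Longrightarrow> - a j \<le> - b j - - b (Suc j)" using assms(1) by force
  from tele_le[of J "\<lambda>j. - a j" "\<lambda>j. - b j" M, OF this assms(2)] show ?thesis by (simp add: sum_negf)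
qed


lemma zt_nonneg: "0 \<le> zt u j" by (simp add: zt_def ww_def)
lemma lt_nonneg: "0 \<le> lt u j" by (simp add: lt_def ww_def)

lemma zt_up: assumes "u > 0" "j \<ge> 1"
  shows "zt u j \<le> HH u (2*real j - 1)/2 - HH u (2*real (Suc j) - 1)/2"
proof -
  have "2 * ww u ((2*real j - 1)+2) \<le> HH u (2*real j - 1) - HH u ((2*real j - 1)+2)"
    using assms by (intro HH_step) auto
  then show ?thesis by (simp add: zt_def algebra_simps)
qed

lemma zt_lo: assumes "u > 0"
  shows "zt u j \<ge> HH u (2*real j + 1)/2 - HH u (2*real j + 3)/2"
proof -
  have "HH u (2*real j + 1) - HH u ((2*real j + 1)+2) \<le> 2 * ww u (2*real j + 1)"
    using assms by (intro HH_step) auto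
  then show ?thesis by (simp add: zt_def algebra_simps)
qed

lemma lt_up: assumes "u > 0" "j \<ge> 2"
  shows "lt u j \<le> FL u (2*real j - 1)/2 - FL u (2*real (Suc j) - 1)/2"
proof -
  have "2 * (ln ((2*real j - 1)+2) * ww u ((2*real j - 1)+2)) \<le> FL u (2*real j - 1) - FL u ((2*real j - 1)+2)"
    using assms by (intro FL_step) auto
  then show ?thesis by (simp add: lt_def algebra_simps)
qed

lemma zt_partial_up: assumes "u > 0"
  shows "sum (zt u) {..<n} \<le> 1 + 3 powr (-u) / 3 + 3 powr (-u) / (2*u)"
proof -
  have "sum (zt u) {..<n} \<le> sum (zt u) {..<n+2}"
    by (intro sum_mono2) (auto simp: zt_nonneg)
  also have "\<dots> \<le> sum (zt u) {..<2} + HH u (2*real 2 - 1)/2 - HH u (2*real (n+2) - 1)/2"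
    using tele_le[of 2 "zt u" "\<lambda>j. HH u (2*real j - 1)/2" "n+2"] zt_up[OF assms] by simp
  also have "\<dots> \<le> sum (zt u) {..<2} + HH u 3/2"
    using HH_nonneg[OF assms] by (simp add: numeral_eq_Suc)
  also have "sum (zt u) {..<2} = 1 + 3 powr (-u) / 3"
  proof -
    have "(3::real) powr (-u-1) = 3 powr (-u) / 3" by (simp add: powr_diff)
    then show ?thesis by (simp add: numeral_eq_Suc zt_def ww_def)
  qed
  finally show ?thesis by (simp add: HH_def)
qed

lemma summable_zt: assumes "u > 0" shows "summable (zt u)"
proof (rule bounded_imp_summable)
  show "\<And>n. 0 \<le> zt u n" by (rule zt_nonneg)
  fix n
  show "sum (zt u) {..n} \<le> 1 + 3 powr (-u) / 3 + 3 powr (-u) / (2*u)"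
    using zt_partial_up[OF assms, of "Suc n"] by (simp add: lessThan_Suc_atMost)
qed

lemma lt_partial_tail: assumes "u > 0" "M \<ge> 2"
  shows "sum (lt u) {..<N} \<le> sum (lt u) {..<M} + FL u (2*real M - 1)/2"
proof (cases "N \<le> M")
  case True
  then have "sum (lt u) {..<N} \<le> sum (lt u) {..<M}"
    by (intro sum_mono2) (auto simp: lt_nonneg)
  moreover have "0 \<le> FL u (2*real M - 1)" using assms by (intro FL_nonneg) auto
  ultimately show ?thesis by simp
next
  case False
  have "sum (lt u) {..<N} \<le> sum (lt u) {..<M} + FL u (2*real M - 1)/2 - FL u (2*real N - 1)/2"
    using tele_le[of M "lt u" "\<lambda>j. FL u (2*real j - 1)/2" N] lt_up[OF assms(1)] assms False by simp
  moreover have "0 \<le> FL u (2*real N - 1)" using assms False by (intro FL_nonneg) auto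
  ultimately show ?thesis by simp
qed

lemma summable_lt: assumes "u > 0" shows "summable (lt u)"
proof (rule bounded_imp_summable)
  show "\<And>n. 0 \<le> lt u n" by (rule lt_nonneg)
  fix n
  show "sum (lt u) {..n} \<le> sum (lt u) {..<2} + FL u (2*real 2 - 1)/2"
    using lt_partial_tail[OF assms, of 2 "Suc n"] by (simp add: lessThan_Suc_atMost)
qed

lemma Z_up: assumes "u > 0"
  shows "suminf (zt u) \<le> 1 + 3 powr (-u) / 3 + 3 powr (-u) / (2*u)"
  by (intro suminf_le_const summable_zt zt_partial_up assms)

lemma HH_lim: assumes "u > 0" shows "(\<lambda>M. HH u (2*real M + 1)) \<longlonglongrightarrow> 0"
  unfolding HH_def using assms by real_asymp

lemma G_lo: assumes "u > 0"
  shows "suminf (zt u) - u * suminf (lt u) \<ge> 1 + (3 powr (-u) / 3) * (1 - u * ln 3) - 3 powr (-u) * ln 5 / 2"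
proof -
  define t where "t = (3::real) powr (-u)"
  define c where "c = 1 + (t/3) * (1 - u * ln 3) + HH u 5/2 - u * FL u 3/2"
  have main: "c - HH u (2*real M + 1)/2 \<le> suminf (zt u) - u * suminf (lt u)" if M2: "M \<ge> 2" for M
  proof -
    have zM: "sum (zt u) {..<M} \<le> suminf (zt u)"
      using summable_zt[OF assms] by (intro sum_le_suminf) (auto simp: zt_nonneg)
    have lM: "suminf (lt u) \<le> sum (lt u) {..<M} + FL u (2*real M - 1)/2"
      by (intro suminf_le_const summable_lt assms lt_partial_tail M2)
    define a where "a j = zt u j - u * lt u j" for j
    define b where "b j = HH u (2*real j + 1)/2 - u * (FL u (2*real j - 1)/2)" for j
    have ab: "a j \<ge> b j - b (Suc j)" if "2 \<le> j" for j
    proof -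
      have "zt u j \<ge> HH u (2*real j + 1)/2 - HH u (2*real j + 3)/2" by (rule zt_lo[OF assms])
      moreover have "lt u j \<le> FL u (2*real j - 1)/2 - FL u (2*real (Suc j) - 1)/2"
        by (rule lt_up[OF assms that])
      then have "u * lt u j \<le> u * (FL u (2*real j - 1)/2 - FL u (2*real (Suc j) - 1)/2)"
        using assms by (intro mult_left_mono) auto
      ultimately show ?thesis unfolding a_def b_def by (simp add: algebra_simps)
    qed
    have sa: "sum a {..<M} \<ge> sum a {..<2} + b 2 - b M"
      by (rule tele_ge[where J=2 and a=a and b=b and M=M, OF ab M2])
    have s2: "sum a {..<2} = 1 + (t/3) * (1 - u * ln 3)"
    proof -
      have e: "(3::real) powr (-u-1) = 3 powr (-u) / 3" by (simp add: powr_diff)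
      have "sum a {..<2} = 1 + 3 powr (-u-1) - u * (ln 3 * 3 powr (-u-1))"
        by (simp add: numeral_eq_Suc a_def zt_def lt_def ww_def)
      also have "\<dots> = 1 + (t/3) * (1 - u * ln 3)" unfolding e t_def by (simp add: field_simps)
      finally show ?thesis .
    qed
    have sp: "sum a {..<M} = sum (zt u) {..<M} - u * sum (lt u) {..<M}"
      by (simp add: a_def sum_subtractf sum_distrib_left)
    have b2: "b 2 = HH u 5/2 - u * FL u 3/2" by (simp add: b_def)
    have bM: "b M = HH u (2*real M + 1)/2 - u * (FL u (2*real M - 1)/2)" by (simp add: b_def)
    have "u * suminf (lt u) \<le> u * (sum (lt u) {..<M} + FL u (2*real M - 1)/2)"
      using lM assms by (intro mult_left_mono) auto
    then show ?thesis using zM sa s2 sp b2 bM unfolding c_def by (simp add: algebra_simps)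
  qed
  have lim: "(\<lambda>M. c - HH u (2*real M + 1)/2) \<longlonglongrightarrow> c - 0/2"
    by (intro tendsto_diff tendsto_divide tendsto_const HH_lim assms) auto
  have cG: "c \<le> suminf (zt u) - u * suminf (lt u)"
    using LIMSEQ_le_const2[OF lim, of "suminf (zt u) - u * suminf (lt u)"] main by auto
  have "HH u 5/2 - u * FL u 3/2 \<ge> - t * ln 5 / 2"
  proof -
    have e5: "(5::real) powr (-u) = t * exp (- (u * (ln 5 - ln 3)))"
      by (simp add: t_def powr_def exp_add[symmetric] algebra_simps)
    have "exp (- (u * (ln 5 - ln 3))) \<ge> 1 - u * (ln 5 - ln 3)"
      using exp_ge_add_one_self[of "- (u * (ln 5 - ln 3))"] by simp
    then have "(5::real) powr (-u) \<ge> t * (1 - u * (ln 5 - ln 3))"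
      unfolding e5 by (intro mult_left_mono) (auto simp: t_def)
    then have i1: "t + t * (u * ln 3) \<le> 5 powr (-u) + t * (u * ln 5)"
      by (simp add: algebra_simps)
    have e1: "u * (HH u 5 - u * FL u 3) = (5::real) powr (-u) - t * (u * ln 3 + 1)"
      using assms by (simp add: HH_def FL_def t_def field_simps power2_eq_square)
    have "u * (HH u 5 - u * FL u 3) \<ge> u * (- t * ln 5)"
      using i1 e1 by (simp add: algebra_simps)
    then have "HH u 5 - u * FL u 3 \<ge> - t * ln 5"
      using assms by (metis mult_le_cancel_left_pos)
    then show ?thesis by simp
  qed
  then show ?thesis using cG unfolding c_def t_def by simp
qed


lemma powr_pow_base: "0 < (x::real) \<Longrightarrow> (x ^ k) powr r = (x powr r) ^ k"
  by (induction k) (auto simp: powr_mult)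

lemma mult_log_le:
  assumes "finite F" "\<forall>p\<in>F. prime p" "(n::nat) > 0"
  shows "(\<Sum>p\<in>F. real (multiplicity p n) * ln (real p)) \<le> ln (real n)"
proof -
  define PF where "PF = prime_factors n"
  have fPF: "finite PF" by (simp add: PF_def)
  define m where "m p = multiplicity p n" for p
  have "n = (\<Prod>p\<in>PF. p ^ m p)"
    using prod_prime_factors[of n] assms by (simp add: PF_def m_def)
  then have "real n = real (\<Prod>p\<in>PF. p ^ m p)" by simp
  also have "\<dots> = (\<Prod>p\<in>PF. real p ^ m p)" by simp
  finally have rn: "real n = (\<Prod>p\<in>PF. real p ^ multiplicity p n)" by (simp add: m_def)
  have "ln (real n) = (\<Sum>p\<in>PF. ln (real p ^ multiplicity p n))"
    unfolding rn by (rule ln_prod[OF fPF]) (auto simp: PF_def in_prime_factors_iff prime_gt_0_nat)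
  then have lnn: "ln (real n) = (\<Sum>p\<in>PF. real (multiplicity p n) * ln (real p))"
    by (simp add: ln_realpow)
  have "(\<Sum>p\<in>F. real (multiplicity p n) * ln (real p)) = (\<Sum>p\<in>F \<inter> PF. real (multiplicity p n) * ln (real p))"
  proof (rule sum.mono_neutral_right)
    show "finite F" by fact
    show "F \<inter> PF \<subseteq> F" by auto
    show "\<forall>i\<in>F - F \<inter> PF. real (multiplicity i n) * ln (real i) = 0"
    proof
      fix p assume p: "p \<in> F - F \<inter> PF"
      then have "\<not> p dvd n" using assms by (auto simp: PF_def in_prime_factors_iff)
      then show "real (multiplicity p n) * ln (real p) = 0" by (simp add: not_dvd_imp_multiplicity_0)
    qed
  qed
  also have "\<dots> \<le> (\<Sum>p\<in>PF. real (multiplicity p n) * ln (real p))"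
  proof (rule sum_mono2[OF fPF])
    show "F \<inter> PF \<subseteq> PF" by auto
    fix b assume "b \<in> PF - F \<inter> PF"
    then have "b > 0" by (auto simp: PF_def in_prime_factors_iff prime_gt_0_nat)
    then show "0 \<le> real (multiplicity b n) * ln (real b)" by simp
  qed
  finally show ?thesis using lnn by simp
qed

definition phi3 :: "nat \<times> nat \<times> nat \<Rightarrow> nat" where
  "phi3 x = fst x ^ fst (snd x) * (2 * snd (snd x) + 1)"

lemma fiber_le:
  assumes "finite F" "\<forall>p\<in>F. prime p" "(n::nat) > 0"
  shows "(\<Sum>x\<in>{x \<in> F \<times> ({1..K} \<times> {..<J}). phi3 x = n}. ln (real (fst x))) \<le> ln (real n)"
proof -
  define Fib where "Fib = {x \<in> F \<times> ({1..K} \<times> {..<J}). phi3 x = n}"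
  define pr where "pr x = (fst x, fst (snd x))" for x :: "nat \<times> nat \<times> nat"
  define B where "B p = {1..multiplicity p n}" for p
  have fin: "finite Fib" unfolding Fib_def using assms by auto
  have inj: "inj_on pr Fib"
  proof (rule inj_onI)
    fix x y assume x: "x \<in> Fib" and y: "y \<in> Fib" and e: "pr x = pr y"
    obtain p k j where xx: "x = (p,k,j)" by (cases x) auto
    obtain p' k' j' where yy: "y = (p',k',j')" by (cases y) auto
    have pp: "p = p'" "k = k'" using e xx yy by (auto simp: pr_def)
    have "p \<in> F" using x xx by (simp add: Fib_def)
    then have "p > 0" using assms prime_gt_0_nat by blast
    moreover have "p ^ k * (2*j+1) = p ^ k * (2*j'+1)"
      using x y xx yy pp by (auto simp: Fib_def phi3_def)
    ultimately have "j = j'" by simp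
    then show "x = y" using xx yy pp by simp
  qed
  have "(\<Sum>x\<in>Fib. ln (real (fst x))) = (\<Sum>y\<in>pr ` Fib. ln (real (fst y)))"
    using sum.reindex[OF inj, of "\<lambda>y. ln (real (fst y))"] by (simp add: pr_def)
  also have "\<dots> \<le> (\<Sum>y\<in>Sigma F B. ln (real (fst y)))"
  proof (rule sum_mono2)
    show "finite (Sigma F B)" using assms by (auto simp: B_def)
    show "pr ` Fib \<subseteq> Sigma F B"
    proof
      fix y assume "y \<in> pr ` Fib"
      then obtain x where x: "x \<in> Fib" "y = pr x" by blast
      obtain p k j where xx: "x = (p,k,j)" by (cases x) auto
      have pF: "p \<in> F" and k1: "1 \<le> k" and ph: "p ^ k * (2*j+1) = n"
        using x(1) xx by (auto simp: Fib_def phi3_def)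
      have pdvd: "p ^ k dvd n" using ph by (metis dvd_triv_left)
      have pp: "prime p" using pF assms by blast
      have nu: "\<not> is_unit p" using pp not_prime_unit by blast
      have "k \<le> multiplicity p n"
        using multiplicity_geI[of n p k] assms(3) nu pdvd by simp
      then show "y \<in> Sigma F B" using x(2) xx pF k1 by (simp add: pr_def B_def)
    qed
    fix b assume "b \<in> Sigma F B - pr ` Fib"
    then have "fst b \<in> F" by auto
    then have "fst b > 0" using assms prime_gt_0_nat by blast
    then show "0 \<le> ln (real (fst b))" by simp
  qed
  also have "(\<Sum>y\<in>Sigma F B. ln (real (fst y))) = (\<Sum>(p,k)\<in>Sigma F B. ln (real p))"
    by (simp add: case_prod_beta)
  also have "\<dots> = (\<Sum>p\<in>F. \<Sum>k\<in>B p. ln (real p))"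
    by (rule sum.Sigma[symmetric]) (use assms in \<open>auto simp: B_def\<close>)
  also have "\<dots> = (\<Sum>p\<in>F. real (multiplicity p n) * ln (real p))"
    by (simp add: B_def)
  also have "\<dots> \<le> ln (real n)" by (rule mult_log_le[OF assms])
  finally have "(\<Sum>x\<in>Fib. ln (real (fst x))) \<le> ln (real n)" .
  then show ?thesis by (simp add: Fib_def)
qed

lemma ww_mult: "0 < a \<Longrightarrow> 0 < b \<Longrightarrow> ww u (a * b) = ww u a * ww u b"
  by (simp add: ww_def powr_mult)

lemma fiber_finite:
  assumes u: "u > 0" and F: "finite F" "\<forall>p\<in>F. prime p \<and> p \<ge> 3"
  shows "(\<Sum>p\<in>F. \<Sum>k\<in>{1..K}. ln (real p) * ww u (real p) ^ k) * sum (zt u) {..<J} \<le> suminf (lt u)"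
proof -
  define S where "S = F \<times> ({1..K} \<times> {..<J})"
  define h where "h x = ln (real (fst x)) * ww u (real (phi3 x))" for x
  have finS: "finite S" using F by (simp add: S_def)
  have Fpos: "\<And>p. p \<in> F \<Longrightarrow> p > 0" using F by auto
  have hx: "h (p,k,j) = ln (real p) * ww u (real p) ^ k * zt u j" if "p \<in> F" for p k j
  proof -
    have "real (phi3 (p,k,j)) = real p ^ k * (2 * real j + 1)" by (simp add: phi3_def algebra_simps)
    then have "ww u (real (phi3 (p,k,j))) = ww u (real p ^ k) * ww u (2 * real j + 1)"
      using Fpos[OF that] by (simp add: ww_mult)
    also have "ww u (real p ^ k) = ww u (real p) ^ k"
      using Fpos[OF that] by (simp add: ww_def powr_pow_base)
    finally show ?thesis by (simp add: h_def zt_def)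
  qed
  have "(\<Sum>p\<in>F. \<Sum>k\<in>{1..K}. ln (real p) * ww u (real p) ^ k) * sum (zt u) {..<J}
      = (\<Sum>p\<in>F. \<Sum>k\<in>{1..K}. ln (real p) * ww u (real p) ^ k * sum (zt u) {..<J})"
    by (simp only: sum_distrib_right)
  also have "\<dots> = (\<Sum>p\<in>F. \<Sum>k\<in>{1..K}. \<Sum>j<J. ln (real p) * ww u (real p) ^ k * zt u j)"
    by (simp only: sum_distrib_left)
  also have "\<dots> = (\<Sum>x\<in>S. h x)"
    unfolding S_def sum.cartesian_product by (rule sum.cong) (auto simp: hx)
  also have "\<dots> = (\<Sum>n\<in>phi3 ` S. \<Sum>x\<in>{x \<in> S. phi3 x = n}. h x)"
    using sum.group[OF finS _ subset_refl, of "phi3" h] finS by simp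
  also have "\<dots> \<le> (\<Sum>n\<in>phi3 ` S. ln (real n) * ww u (real n))"
  proof (rule sum_mono)
    fix n assume n: "n \<in> phi3 ` S"
    have npos: "n > 0" using n Fpos by (auto simp: S_def phi3_def)
    have "(\<Sum>x\<in>{x \<in> S. phi3 x = n}. h x) = (\<Sum>x\<in>{x \<in> S. phi3 x = n}. ln (real (fst x))) * ww u (real n)"
      by (simp add: h_def sum_distrib_right)
    also have "\<dots> \<le> ln (real n) * ww u (real n)"
      using fiber_le[of F n K J] F npos
      by (intro mult_right_mono) (auto simp: S_def ww_def)
    finally show "(\<Sum>x\<in>{x \<in> S. phi3 x = n}. h x) \<le> ln (real n) * ww u (real n)" .
  qed
  also have "\<dots> \<le> suminf (lt u)"
  proof -
    define N where "N = Suc (Max (phi3 ` S))"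
    have sub: "phi3 ` S \<subseteq> (\<lambda>j. 2*j+1) ` {..<N}"
    proof
      fix n assume n: "n \<in> phi3 ` S"
      then obtain p k j where pkj: "(p,k,j) \<in> S" "n = p ^ k * (2*j+1)" by (auto simp: phi3_def)
      have pF: "prime p" "3 \<le> p" using pkj(1) F by (auto simp: S_def)
      have "odd p" using pF prime_odd_nat[of p] by simp
      then have "odd (p^k)" by simp
      then have "odd n" using pkj(2) by simp
      then have "n = 2 * (n div 2) + 1" by presburger
      moreover have "n \<le> Max (phi3 ` S)" using n finS by simp
      then have "n div 2 < N" unfolding N_def by linarith
      ultimately show "n \<in> (\<lambda>j. 2*j+1) ` {..<N}" by blast
    qed
    have "(\<Sum>n\<in>phi3 ` S. ln (real n) * ww u (real n)) \<le> (\<Sum>n\<in>(\<lambda>j. 2*j+1) ` {..<N}. ln (real n) * ww u (real n))"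
      by (intro sum_mono2 sub) (auto simp: ww_def)
    also have "\<dots> = sum (lt u) {..<N}"
      by (subst sum.reindex) (auto simp: inj_on_def lt_def add.commute)
    also have "\<dots> \<le> suminf (lt u)"
      using summable_lt[OF u] by (intro sum_le_suminf) (auto simp: lt_nonneg)
    finally show ?thesis .
  qed
  finally show ?thesis .
qed

definition PhiOK :: "real \<Rightarrow> bool" where
  "PhiOK u \<longleftrightarrow> (u + u * 3 powr (-u) / 3 + 3 powr (-u) / 2) *
     (ln 3 * (3 powr (-u) * (2 - 3 powr (-u)) / (3 - 3 powr (-u))) + 0.3416 * (2 * 3 powr (-u) - (3 powr (-u))^2))
   \<le> 1 + (3 powr (-u) / 3) * (1 - u * ln 3) - 3 powr (-u) * ln 5 / 2"

lemma T_bound: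
  fixes a :: real assumes "0 \<le> a"
  shows "3 powr (-a) \<le> 1 / (1 + a*0.2745 + (a*0.2745)^2/2 + (a*0.2745)^3/6 + (a*0.2745)^4/24 + (a*0.2745)^5/120)^4"
proof -
  define y where "y = a * 0.2745"
  have y0: "0 \<le> y" using assms by (simp add: y_def)
  have P0: "0 < 1 + y + y^2/2 + y^3/6 + y^4/24 + y^5/120" using y0 by (simp add: add_pos_nonneg)
  have "(1 + y + y^2/2 + y^3/6 + y^4/24 + y^5/120)^4 \<le> exp y ^ 4"
    using exp_lower_taylor5[OF y0] P0 by (intro power_mono) auto
  also have "exp y ^ 4 = exp (4 * y)" by (simp add: exp_of_nat_mult[symmetric])
  also have "\<dots> \<le> exp (a * ln 3)"
  proof -
    have "a * 1.098 \<le> a * ln 3" using mult_left_mono[OF ln3_lo assms] .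
    then have "4 * y \<le> a * ln 3" by (simp add: y_def)
    then show ?thesis by simp
  qed
  finally have le: "(1 + y + y^2/2 + y^3/6 + y^4/24 + y^5/120)^4 \<le> 3 powr a"
    by (simp add: powr_def mult.commute)
  have "3 powr (-a) = 1 / 3 powr a" by (simp add: powr_minus divide_inverse)
  also have "\<dots> \<le> 1 / (1 + y + y^2/2 + y^3/6 + y^4/24 + y^5/120)^4"
    using le P0 by (intro divide_left_mono) auto
  finally show ?thesis by (simp add: y_def)
qed

lemma q_mono:
  fixes t T :: real assumes "0 \<le> t" "t \<le> T" "T \<le> 1"
  shows "t * (2 - t) / (3 - t) \<le> T * (2 - T) / (3 - T)"
proof -
  have "T * (2 - T) * (3 - t) - t * (2 - t) * (3 - T) = (T - t) * (6 - 3 * (T + t) + T * t)"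
    by (simp add: algebra_simps)
  moreover have "0 \<le> (T - t) * (6 - 3 * (T + t) + T * t)"
    using assms by (intro mult_nonneg_nonneg) auto
  ultimately have "t * (2 - t) * (3 - T) \<le> T * (2 - T) * (3 - t)" by linarith
  then show ?thesis using assms by (simp add: divide_simps mult.commute mult.left_commute)
qed

lemma interval_ok:
  fixes a b u T :: real
  assumes "a \<le> u" "u \<le> b" "0 \<le> a" "3 powr (-a) \<le> T" "T \<le> 1"
    "0 \<le> 1 + T * ((1 - b * 1.0988) / 3 - 1.6096 / 2) - (b + b * T / 3 + T / 2) * (1.0988 * (T * (2 - T) / (3 - T)) + 0.3416 * (2 * T - T^2))"
  shows "PhiOK u"
proof -
  define t where "t = (3::real) powr (-u)"
  have u0: "0 \<le> u" using assms by simp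
  have t0: "0 < t" by (simp add: t_def)
  have tT: "t \<le> T" using assms(1,4) unfolding t_def by (smt (verit) powr_le_cancel_iff)
  have t1: "t \<le> 1" using tT assms(5) by linarith
  have l3: "0 \<le> ln (3::real)" "ln (3::real) \<le> 1.0988" using ln3_up by auto
  have l5: "ln (5::real) \<le> 1.6096" using ln5_up by auto
  define beta where "beta = (1 - u * ln 3) / 3 - ln 5 / 2"
  define betaU where "betaU = (1 - b * 1.0988) / 3 - 1.6096 / (2::real)"
  have "u * ln 3 \<le> b * 1.0988" using assms l3 u0 by (intro mult_mono) auto
  then have bb: "betaU \<le> beta" using l5 unfolding beta_def betaU_def by (simp add: field_simps)
  have bU0: "betaU \<le> 0" using assms unfolding betaU_def by simp
  have "t * betaU \<le> t * beta" using bb t0 by (intro mult_left_mono) auto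
  moreover have "T * betaU \<le> t * betaU" using tT bU0 by (intro mult_right_mono_neg) auto
  ultimately have G: "1 + T * betaU \<le> 1 + (t / 3) * (1 - u * ln 3) - t * ln 5 / 2"
    unfolding beta_def by (simp add: algebra_simps)
  have Z: "u + u * t / 3 + t / 2 \<le> b + b * T / 3 + T / 2"
  proof -
    have "u * t \<le> b * T" using assms u0 t0 tT by (intro mult_mono) auto
    then show ?thesis using assms tT by simp
  qed
  have Z0: "0 \<le> u + u * t / 3 + t / 2" using u0 t0 by simp
  have q: "t * (2 - t) / (3 - t) \<le> T * (2 - T) / (3 - T)" using t0 tT assms by (intro q_mono) auto
  have q0: "0 \<le> t * (2 - t) / (3 - t)" using t0 t1 by simp
  have D1: "ln 3 * (t * (2 - t) / (3 - t)) \<le> 1.0988 * (T * (2 - T) / (3 - T))"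
    using l3 q q0 by (intro mult_mono) auto
  have D2: "2 * t - t^2 \<le> 2 * T - T^2"
  proof -
    have "(2 * T - T^2) - (2 * t - t^2) = (T - t) * (2 - T - t)" by (simp add: algebra_simps power2_eq_square)
    moreover have "0 \<le> (T - t) * (2 - T - t)" using tT t1 assms by (intro mult_nonneg_nonneg) auto
    ultimately show ?thesis by linarith
  qed
  have D: "ln 3 * (t * (2 - t) / (3 - t)) + 0.3416 * (2 * t - t^2) \<le> 1.0988 * (T * (2 - T) / (3 - T)) + 0.3416 * (2 * T - T^2)"
  proof -
    have "0.3416 * (2 * t - t^2) \<le> 0.3416 * (2 * T - T^2)" using D2 by simp
    then show ?thesis using D1 by linarith
  qed
  have D0: "0 \<le> ln 3 * (t * (2 - t) / (3 - t)) + 0.3416 * (2 * t - t^2)"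
  proof -
    have "0 \<le> t * (2 - t)" using t0 t1 by simp
    then have "0 \<le> 2 * t - t^2" by (simp add: algebra_simps power2_eq_square)
    then have "0 \<le> 0.3416 * (2 * t - t^2)" by simp
    moreover have "0 \<le> ln 3 * (t * (2 - t) / (3 - t))" by (rule mult_nonneg_nonneg[OF l3(1) q0])
    ultimately show ?thesis by linarith
  qed
  have "(u + u * t / 3 + t / 2) * (ln 3 * (t * (2 - t) / (3 - t)) + 0.3416 * (2 * t - t^2))
     \<le> (b + b * T / 3 + T / 2) * (1.0988 * (T * (2 - T) / (3 - T)) + 0.3416 * (2 * T - T^2))"
    using Z D Z0 D0 by (intro mult_mono) auto
  then show ?thesis using G assms(6) unfolding PhiOK_def t_def[symmetric] betaU_def by linarith
qed

lemma tail_ok: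
  fixes u :: real assumes "2 \<le> u"
  shows "PhiOK u"
proof -
  define t where "t = (3::real) powr (-u)"
  have t0: "0 < t" by (simp add: t_def)
  have t9: "t \<le> 1/9"
  proof -
    have "t \<le> 3 powr (-2)" unfolding t_def using assms by (intro powr_mono) auto
    moreover have e9: "(3::real) powr (-2) = 1/9" by (simp add: powr_neg_numeral)
    ultimately show ?thesis by simp
  qed
  have ut: "u * t \<le> 2/9"
  proof -
    have "3 powr (u - 2) \<ge> 1 + (u - 2) * ln 3"
      using exp_ge_add_one_self[of "(u-2) * ln 3"] by (simp add: powr_def mult.commute)
    moreover have "(u - 2) * ln 3 \<ge> (u - 2) * 1"
      using assms ln3_gt_1 by (intro mult_left_mono) auto
    ultimately have g: "3 powr (u - 2) \<ge> u / 2" using assms by simp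
    have "(3::real) powr (-2) / 3 powr (u - 2) = 3 powr (-2 - (u - 2))" by (rule powr_diff[symmetric])
    then have "t = 3 powr (-2) / 3 powr (u - 2)" unfolding t_def by simp
    moreover have e9: "(3::real) powr (-2) = 1/9" by (simp add: powr_neg_numeral)
    ultimately have "t = (1/9) / 3 powr (u - 2)" by simp
    then have "u * t = u / (9 * 3 powr (u - 2))" by simp
    also have "\<dots> \<le> u / (9 * (u / 2))"
      using g assms by (intro divide_left_mono mult_left_mono) auto
    also have "\<dots> = 2/9" using assms by simp
    finally show ?thesis .
  qed
  have l3: "0 \<le> ln (3::real)" "ln (3::real) \<le> 1.0988" using ln3_up by auto
  have l5: "0 \<le> ln (5::real)" "ln (5::real) \<le> 1.6096" using ln5_up by auto
  have q1: "t * (2 - t) / (3 - t) \<le> t"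
  proof -
    have "(2 - t) / (3 - t) \<le> 1" using t9 by simp
    then have "t * ((2 - t) / (3 - t)) \<le> t * 1" using t0 by (intro mult_left_mono) auto
    then show ?thesis by simp
  qed
  have q0: "0 \<le> t * (2 - t) / (3 - t)" using t0 t9 by simp
  have D: "ln 3 * (t * (2 - t) / (3 - t)) + 0.3416 * (2 * t - t^2) \<le> 1.8 * t"
  proof -
    have A: "ln 3 * (t * (2 - t) / (3 - t)) \<le> 1.0988 * t" using l3 q1 q0 by (intro mult_mono) auto
    have "0 \<le> t^2" by simp
    then have B: "0.3416 * (2 * t - t^2) \<le> 0.7 * t" using t0 by (simp add: algebra_simps)
    have "1.0988 * t + 0.7 * t \<le> 1.8 * t" using t0 by simp
    with add_mono[OF A B] show ?thesis by (rule order_trans)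
  qed
  have D0: "0 \<le> ln 3 * (t * (2 - t) / (3 - t)) + 0.3416 * (2 * t - t^2)"
  proof -
    have "0 \<le> t * (2 - t)" using t0 t9 by simp
    then have "0 \<le> 2 * t - t^2" by (simp add: algebra_simps power2_eq_square)
    then have "0 \<le> 0.3416 * (2 * t - t^2)" by simp
    moreover have "0 \<le> ln 3 * (t * (2 - t) / (3 - t))" by (rule mult_nonneg_nonneg[OF l3(1) q0])
    ultimately show ?thesis by linarith
  qed
  have "(u + u * t / 3 + t / 2) * (ln 3 * (t * (2 - t) / (3 - t)) + 0.3416 * (2 * t - t^2))
        \<le> (u + u * t / 3 + t / 2) * (1.8 * t)"
    using D assms t0 by (intro mult_left_mono) auto
  also have "\<dots> = 1.8 * (u * t) + 0.6 * (u * t) * t + 0.9 * t * t" by (simp add: algebra_simps)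
  also have "\<dots> \<le> 1.8 * (2/9) + 0.6 * (2/9) * (1/9) + 0.9 * (1/9) * (1/9)"
  proof -
    have "(u * t) * t \<le> (2/9) * (1/9)" using ut t9 t0 assms by (intro mult_mono) auto
    moreover have "t * t \<le> (1/9) * (1/9)" using t9 t0 by (intro mult_mono) auto
    ultimately show ?thesis using ut by simp
  qed
  finally have L: "(u + u * t / 3 + t / 2) * (ln 3 * (t * (2 - t) / (3 - t)) + 0.3416 * (2 * t - t^2)) \<le> 0.43" by simp
  have "(u * t) * ln 3 \<le> (2/9) * 1.0988" using ut l3 t0 assms by (intro mult_mono) auto
  moreover have "t * ln 5 \<le> (1/9) * 1.6096" using t9 l5 t0 by (intro mult_mono) auto
  ultimately have "1 + (t / 3) * (1 - u * ln 3) - t * ln 5 / 2 \<ge> 0.43"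
    using t0 by (simp add: algebra_simps)
  then show ?thesis using L unfolding PhiOK_def t_def[symmetric] by linarith
qed

lemma iv0: "0 \<le> u \<Longrightarrow> u \<le> 0.052 \<Longrightarrow> PhiOK u"
proof -
  assume h: "0 \<le> u" "u \<le> 0.052"
  have "(3::real) powr (-0) \<le> 1 / (1 + 0*0.2745 + (0*0.2745)^2/2 + (0*0.2745)^3/6 + (0*0.2745)^4/24 + (0*0.2745)^5/120)^4"
    by (rule T_bound) simp
  also have "\<dots> \<le> 1" by (simp add: power_divide)
  finally have T: "(3::real) powr (-0) \<le> 1" .
  show ?thesis
    by (rule interval_ok[OF h _ T]) (simp_all add: power_divide)
qed

lemma iv1: "0.052 \<le> u \<Longrightarrow> u \<le> 0.094 \<Longrightarrow> PhiOK u"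
proof -
  assume h: "0.052 \<le> u" "u \<le> 0.094"
  have "(3::real) powr (-0.052) \<le> 1 / (1 + 0.052*0.2745 + (0.052*0.2745)^2/2 + (0.052*0.2745)^3/6 + (0.052*0.2745)^4/24 + (0.052*0.2745)^5/120)^4"
    by (rule T_bound) simp
  also have "\<dots> \<le> 0.94451" by (simp add: power_divide)
  finally have T: "(3::real) powr (-0.052) \<le> 0.94451" .
  show ?thesis
    by (rule interval_ok[OF h _ T]) (simp_all add: power_divide)
qed

lemma iv2: "0.094 \<le> u \<Longrightarrow> u \<le> 0.129 \<Longrightarrow> PhiOK u"
proof -
  assume h: "0.094 \<le> u" "u \<le> 0.129"
  have "(3::real) powr (-0.094) \<le> 1 / (1 + 0.094*0.2745 + (0.094*0.2745)^2/2 + (0.094*0.2745)^3/6 + (0.094*0.2745)^4/24 + (0.094*0.2745)^5/120)^4"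
    by (rule T_bound) simp
  also have "\<dots> \<le> 0.90194" by (simp add: power_divide)
  finally have T: "(3::real) powr (-0.094) \<le> 0.90194" .
  show ?thesis
    by (rule interval_ok[OF h _ T]) (simp_all add: power_divide)
qed

lemma iv3: "0.129 \<le> u \<Longrightarrow> u \<le> 0.159 \<Longrightarrow> PhiOK u"
proof -
  assume h: "0.129 \<le> u" "u \<le> 0.159"
  have "(3::real) powr (-0.129) \<le> 1 / (1 + 0.129*0.2745 + (0.129*0.2745)^2/2 + (0.129*0.2745)^3/6 + (0.129*0.2745)^4/24 + (0.129*0.2745)^5/120)^4"
    by (rule T_bound) simp
  also have "\<dots> \<le> 0.86794" by (simp add: power_divide)
  finally have T: "(3::real) powr (-0.129) \<le> 0.86794" .
  show ?thesis
    by (rule interval_ok[OF h _ T]) (simp_all add: power_divide)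
qed

lemma iv4: "0.159 \<le> u \<Longrightarrow> u \<le> 0.186 \<Longrightarrow> PhiOK u"
proof -
  assume h: "0.159 \<le> u" "u \<le> 0.186"
  have "(3::real) powr (-0.159) \<le> 1 / (1 + 0.159*0.2745 + (0.159*0.2745)^2/2 + (0.159*0.2745)^3/6 + (0.159*0.2745)^4/24 + (0.159*0.2745)^5/120)^4"
    by (rule T_bound) simp
  also have "\<dots> \<le> 0.83981" by (simp add: power_divide)
  finally have T: "(3::real) powr (-0.159) \<le> 0.83981" .
  show ?thesis
    by (rule interval_ok[OF h _ T]) (simp_all add: power_divide)
qed

lemma iv5: "0.186 \<le> u \<Longrightarrow> u \<le> 0.211 \<Longrightarrow> PhiOK u"
proof -
  assume h: "0.186 \<le> u" "u \<le> 0.211"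
  have "(3::real) powr (-0.186) \<le> 1 / (1 + 0.186*0.2745 + (0.186*0.2745)^2/2 + (0.186*0.2745)^3/6 + (0.186*0.2745)^4/24 + (0.186*0.2745)^5/120)^4"
    by (rule T_bound) simp
  also have "\<dots> \<le> 0.81528" by (simp add: power_divide)
  finally have T: "(3::real) powr (-0.186) \<le> 0.81528" .
  show ?thesis
    by (rule interval_ok[OF h _ T]) (simp_all add: power_divide)
qed

lemma iv6: "0.211 \<le> u \<Longrightarrow> u \<le> 0.234 \<Longrightarrow> PhiOK u"
proof -
  assume h: "0.211 \<le> u" "u \<le> 0.234"
  have "(3::real) powr (-0.211) \<le> 1 / (1 + 0.211*0.2745 + (0.211*0.2745)^2/2 + (0.211*0.2745)^3/6 + (0.211*0.2745)^4/24 + (0.211*0.2745)^5/120)^4"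
    by (rule T_bound) simp
  also have "\<dots> \<le> 0.79321" by (simp add: power_divide)
  finally have T: "(3::real) powr (-0.211) \<le> 0.79321" .
  show ?thesis
    by (rule interval_ok[OF h _ T]) (simp_all add: power_divide)
qed

lemma iv7: "0.234 \<le> u \<Longrightarrow> u \<le> 0.256 \<Longrightarrow> PhiOK u"
proof -
  assume h: "0.234 \<le> u" "u \<le> 0.256"
  have "(3::real) powr (-0.234) \<le> 1 / (1 + 0.234*0.2745 + (0.234*0.2745)^2/2 + (0.234*0.2745)^3/6 + (0.234*0.2745)^4/24 + (0.234*0.2745)^5/120)^4"
    by (rule T_bound) simp
  also have "\<dots> \<le> 0.77343" by (simp add: power_divide)
  finally have T: "(3::real) powr (-0.234) \<le> 0.77343" .
  show ?thesis
    by (rule interval_ok[OF h _ T]) (simp_all add: power_divide)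
qed

lemma iv8: "0.256 \<le> u \<Longrightarrow> u \<le> 0.277 \<Longrightarrow> PhiOK u"
proof -
  assume h: "0.256 \<le> u" "u \<le> 0.277"
  have "(3::real) powr (-0.256) \<le> 1 / (1 + 0.256*0.2745 + (0.256*0.2745)^2/2 + (0.256*0.2745)^3/6 + (0.256*0.2745)^4/24 + (0.256*0.2745)^5/120)^4"
    by (rule T_bound) simp
  also have "\<dots> \<le> 0.75497" by (simp add: power_divide)
  finally have T: "(3::real) powr (-0.256) \<le> 0.75497" .
  show ?thesis
    by (rule interval_ok[OF h _ T]) (simp_all add: power_divide)
qed

lemma iv9: "0.277 \<le> u \<Longrightarrow> u \<le> 0.298 \<Longrightarrow> PhiOK u"
proof -
  assume h: "0.277 \<le> u" "u \<le> 0.298"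
  have "(3::real) powr (-0.277) \<le> 1 / (1 + 0.277*0.2745 + (0.277*0.2745)^2/2 + (0.277*0.2745)^3/6 + (0.277*0.2745)^4/24 + (0.277*0.2745)^5/120)^4"
    by (rule T_bound) simp
  also have "\<dots> \<le> 0.73776" by (simp add: power_divide)
  finally have T: "(3::real) powr (-0.277) \<le> 0.73776" .
  show ?thesis
    by (rule interval_ok[OF h _ T]) (simp_all add: power_divide)
qed

lemma iv10: "0.298 \<le> u \<Longrightarrow> u \<le> 0.319 \<Longrightarrow> PhiOK u"
proof -
  assume h: "0.298 \<le> u" "u \<le> 0.319"
  have "(3::real) powr (-0.298) \<le> 1 / (1 + 0.298*0.2745 + (0.298*0.2745)^2/2 + (0.298*0.2745)^3/6 + (0.298*0.2745)^4/24 + (0.298*0.2745)^5/120)^4"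
    by (rule T_bound) simp
  also have "\<dots> \<le> 0.72094" by (simp add: power_divide)
  finally have T: "(3::real) powr (-0.298) \<le> 0.72094" .
  show ?thesis
    by (rule interval_ok[OF h _ T]) (simp_all add: power_divide)
qed

lemma iv11: "0.319 \<le> u \<Longrightarrow> u \<le> 0.34 \<Longrightarrow> PhiOK u"
proof -
  assume h: "0.319 \<le> u" "u \<le> 0.34"
  have "(3::real) powr (-0.319) \<le> 1 / (1 + 0.319*0.2745 + (0.319*0.2745)^2/2 + (0.319*0.2745)^3/6 + (0.319*0.2745)^4/24 + (0.319*0.2745)^5/120)^4"
    by (rule T_bound) simp
  also have "\<dots> \<le> 0.70451" by (simp add: power_divide)
  finally have T: "(3::real) powr (-0.319) \<le> 0.70451" .
  show ?thesis
    by (rule interval_ok[OF h _ T]) (simp_all add: power_divide)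
qed

lemma iv12: "0.34 \<le> u \<Longrightarrow> u \<le> 0.362 \<Longrightarrow> PhiOK u"
proof -
  assume h: "0.34 \<le> u" "u \<le> 0.362"
  have "(3::real) powr (-0.34) \<le> 1 / (1 + 0.34*0.2745 + (0.34*0.2745)^2/2 + (0.34*0.2745)^3/6 + (0.34*0.2745)^4/24 + (0.34*0.2745)^5/120)^4"
    by (rule T_bound) simp
  also have "\<dots> \<le> 0.68845" by (simp add: power_divide)
  finally have T: "(3::real) powr (-0.34) \<le> 0.68845" .
  show ?thesis
    by (rule interval_ok[OF h _ T]) (simp_all add: power_divide)
qed

lemma iv13: "0.362 \<le> u \<Longrightarrow> u \<le> 0.386 \<Longrightarrow> PhiOK u"
proof -
  assume h: "0.362 \<le> u" "u \<le> 0.386"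
  have "(3::real) powr (-0.362) \<le> 1 / (1 + 0.362*0.2745 + (0.362*0.2745)^2/2 + (0.362*0.2745)^3/6 + (0.362*0.2745)^4/24 + (0.362*0.2745)^5/120)^4"
    by (rule T_bound) simp
  also have "\<dots> \<le> 0.67202" by (simp add: power_divide)
  finally have T: "(3::real) powr (-0.362) \<le> 0.67202" .
  show ?thesis
    by (rule interval_ok[OF h _ T]) (simp_all add: power_divide)
qed

lemma iv14: "0.386 \<le> u \<Longrightarrow> u \<le> 0.412 \<Longrightarrow> PhiOK u"
proof -
  assume h: "0.386 \<le> u" "u \<le> 0.412"
  have "(3::real) powr (-0.386) \<le> 1 / (1 + 0.386*0.2745 + (0.386*0.2745)^2/2 + (0.386*0.2745)^3/6 + (0.386*0.2745)^4/24 + (0.386*0.2745)^5/120)^4"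
    by (rule T_bound) simp
  also have "\<dots> \<le> 0.65454" by (simp add: power_divide)
  finally have T: "(3::real) powr (-0.386) \<le> 0.65454" .
  show ?thesis
    by (rule interval_ok[OF h _ T]) (simp_all add: power_divide)
qed

lemma iv15: "0.412 \<le> u \<Longrightarrow> u \<le> 0.44 \<Longrightarrow> PhiOK u"
proof -
  assume h: "0.412 \<le> u" "u \<le> 0.44"
  have "(3::real) powr (-0.412) \<le> 1 / (1 + 0.412*0.2745 + (0.412*0.2745)^2/2 + (0.412*0.2745)^3/6 + (0.412*0.2745)^4/24 + (0.412*0.2745)^5/120)^4"
    by (rule T_bound) simp
  also have "\<dots> \<le> 0.63612" by (simp add: power_divide)
  finally have T: "(3::real) powr (-0.412) \<le> 0.63612" .
  show ?thesis
    by (rule interval_ok[OF h _ T]) (simp_all add: power_divide)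
qed

lemma iv16: "0.44 \<le> u \<Longrightarrow> u \<le> 0.472 \<Longrightarrow> PhiOK u"
proof -
  assume h: "0.44 \<le> u" "u \<le> 0.472"
  have "(3::real) powr (-0.44) \<le> 1 / (1 + 0.44*0.2745 + (0.44*0.2745)^2/2 + (0.44*0.2745)^3/6 + (0.44*0.2745)^4/24 + (0.44*0.2745)^5/120)^4"
    by (rule T_bound) simp
  also have "\<dots> \<le> 0.61686" by (simp add: power_divide)
  finally have T: "(3::real) powr (-0.44) \<le> 0.61686" .
  show ?thesis
    by (rule interval_ok[OF h _ T]) (simp_all add: power_divide)
qed

lemma iv17: "0.472 \<le> u \<Longrightarrow> u \<le> 0.509 \<Longrightarrow> PhiOK u"
proof -
  assume h: "0.472 \<le> u" "u \<le> 0.509"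
  have "(3::real) powr (-0.472) \<le> 1 / (1 + 0.472*0.2745 + (0.472*0.2745)^2/2 + (0.472*0.2745)^3/6 + (0.472*0.2745)^4/24 + (0.472*0.2745)^5/120)^4"
    by (rule T_bound) simp
  also have "\<dots> \<le> 0.59556" by (simp add: power_divide)
  finally have T: "(3::real) powr (-0.472) \<le> 0.59556" .
  show ?thesis
    by (rule interval_ok[OF h _ T]) (simp_all add: power_divide)
qed

lemma iv18: "0.509 \<le> u \<Longrightarrow> u \<le> 0.554 \<Longrightarrow> PhiOK u"
proof -
  assume h: "0.509 \<le> u" "u \<le> 0.554"
  have "(3::real) powr (-0.509) \<le> 1 / (1 + 0.509*0.2745 + (0.509*0.2745)^2/2 + (0.509*0.2745)^3/6 + (0.509*0.2745)^4/24 + (0.509*0.2745)^5/120)^4"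
    by (rule T_bound) simp
  also have "\<dots> \<le> 0.57185" by (simp add: power_divide)
  finally have T: "(3::real) powr (-0.509) \<le> 0.57185" .
  show ?thesis
    by (rule interval_ok[OF h _ T]) (simp_all add: power_divide)
qed

lemma iv19: "0.554 \<le> u \<Longrightarrow> u \<le> 0.61 \<Longrightarrow> PhiOK u"
proof -
  assume h: "0.554 \<le> u" "u \<le> 0.61"
  have "(3::real) powr (-0.554) \<le> 1 / (1 + 0.554*0.2745 + (0.554*0.2745)^2/2 + (0.554*0.2745)^3/6 + (0.554*0.2745)^4/24 + (0.554*0.2745)^5/120)^4"
    by (rule T_bound) simp
  also have "\<dots> \<le> 0.54428" by (simp add: power_divide)
  finally have T: "(3::real) powr (-0.554) \<le> 0.54428" .
  show ?thesis
    by (rule interval_ok[OF h _ T]) (simp_all add: power_divide)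
qed

lemma iv20: "0.61 \<le> u \<Longrightarrow> u \<le> 0.683 \<Longrightarrow> PhiOK u"
proof -
  assume h: "0.61 \<le> u" "u \<le> 0.683"
  have "(3::real) powr (-0.61) \<le> 1 / (1 + 0.61*0.2745 + (0.61*0.2745)^2/2 + (0.61*0.2745)^3/6 + (0.61*0.2745)^4/24 + (0.61*0.2745)^5/120)^4"
    by (rule T_bound) simp
  also have "\<dots> \<le> 0.51183" by (simp add: power_divide)
  finally have T: "(3::real) powr (-0.61) \<le> 0.51183" .
  show ?thesis
    by (rule interval_ok[OF h _ T]) (simp_all add: power_divide)
qed

lemma iv21: "0.683 \<le> u \<Longrightarrow> u \<le> 0.783 \<Longrightarrow> PhiOK u"
proof -
  assume h: "0.683 \<le> u" "u \<le> 0.783"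
  have "(3::real) powr (-0.683) \<le> 1 / (1 + 0.683*0.2745 + (0.683*0.2745)^2/2 + (0.683*0.2745)^3/6 + (0.683*0.2745)^4/24 + (0.683*0.2745)^5/120)^4"
    by (rule T_bound) simp
  also have "\<dots> \<le> 0.4724" by (simp add: power_divide)
  finally have T: "(3::real) powr (-0.683) \<le> 0.4724" .
  show ?thesis
    by (rule interval_ok[OF h _ T]) (simp_all add: power_divide)
qed

lemma iv22: "0.783 \<le> u \<Longrightarrow> u \<le> 0.933 \<Longrightarrow> PhiOK u"
proof -
  assume h: "0.783 \<le> u" "u \<le> 0.933"
  have "(3::real) powr (-0.783) \<le> 1 / (1 + 0.783*0.2745 + (0.783*0.2745)^2/2 + (0.783*0.2745)^3/6 + (0.783*0.2745)^4/24 + (0.783*0.2745)^5/120)^4"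
    by (rule T_bound) simp
  also have "\<dots> \<le> 0.42328" by (simp add: power_divide)
  finally have T: "(3::real) powr (-0.783) \<le> 0.42328" .
  show ?thesis
    by (rule interval_ok[OF h _ T]) (simp_all add: power_divide)
qed

lemma iv23: "0.933 \<le> u \<Longrightarrow> u \<le> 1.187 \<Longrightarrow> PhiOK u"
proof -
  assume h: "0.933 \<le> u" "u \<le> 1.187"
  have "(3::real) powr (-0.933) \<le> 1 / (1 + 0.933*0.2745 + (0.933*0.2745)^2/2 + (0.933*0.2745)^3/6 + (0.933*0.2745)^4/24 + (0.933*0.2745)^5/120)^4"
    by (rule T_bound) simp
  also have "\<dots> \<le> 0.35901" by (simp add: power_divide)
  finally have T: "(3::real) powr (-0.933) \<le> 0.35901" .
  show ?thesis
    by (rule interval_ok[OF h _ T]) (simp_all add: power_divide)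
qed

lemma iv24: "1.187 \<le> u \<Longrightarrow> u \<le> 1.713 \<Longrightarrow> PhiOK u"
proof -
  assume h: "1.187 \<le> u" "u \<le> 1.713"
  have "(3::real) powr (-1.187) \<le> 1 / (1 + 1.187*0.2745 + (1.187*0.2745)^2/2 + (1.187*0.2745)^3/6 + (1.187*0.2745)^4/24 + (1.187*0.2745)^5/120)^4"
    by (rule T_bound) simp
  also have "\<dots> \<le> 0.27163" by (simp add: power_divide)
  finally have T: "(3::real) powr (-1.187) \<le> 0.27163" .
  show ?thesis
    by (rule interval_ok[OF h _ T]) (simp_all add: power_divide)
qed

lemma iv25: "1.713 \<le> u \<Longrightarrow> u \<le> 2 \<Longrightarrow> PhiOK u"
proof -
  assume h: "1.713 \<le> u" "u \<le> 2"
  have "(3::real) powr (-1.713) \<le> 1 / (1 + 1.713*0.2745 + (1.713*0.2745)^2/2 + (1.713*0.2745)^3/6 + (1.713*0.2745)^4/24 + (1.713*0.2745)^5/120)^4"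
    by (rule T_bound) simp
  also have "\<dots> \<le> 0.15247" by (simp add: power_divide)
  finally have T: "(3::real) powr (-1.713) \<le> 0.15247" .
  show ?thesis
    by (rule interval_ok[OF h _ T]) (simp_all add: power_divide)
qed

lemma cover_all: "0 < u \<Longrightarrow> u \<le> 2 \<Longrightarrow> PhiOK u"
proof -
  assume u: "0 < u" "u \<le> 2"
  have c0: "0 \<le> u \<Longrightarrow> u \<le> 0.052 \<Longrightarrow> PhiOK u" by (rule iv0)
  have c1: "0.052 \<le> u \<Longrightarrow> u \<le> 0.094 \<Longrightarrow> PhiOK u" by (rule iv1)
  have c2: "0.094 \<le> u \<Longrightarrow> u \<le> 0.129 \<Longrightarrow> PhiOK u" by (rule iv2)
  have c3: "0.129 \<le> u \<Longrightarrow> u \<le> 0.159 \<Longrightarrow> PhiOK u" by (rule iv3)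
  have c4: "0.159 \<le> u \<Longrightarrow> u \<le> 0.186 \<Longrightarrow> PhiOK u" by (rule iv4)
  have c5: "0.186 \<le> u \<Longrightarrow> u \<le> 0.211 \<Longrightarrow> PhiOK u" by (rule iv5)
  have c6: "0.211 \<le> u \<Longrightarrow> u \<le> 0.234 \<Longrightarrow> PhiOK u" by (rule iv6)
  have c7: "0.234 \<le> u \<Longrightarrow> u \<le> 0.256 \<Longrightarrow> PhiOK u" by (rule iv7)
  have c8: "0.256 \<le> u \<Longrightarrow> u \<le> 0.277 \<Longrightarrow> PhiOK u" by (rule iv8)
  have c9: "0.277 \<le> u \<Longrightarrow> u \<le> 0.298 \<Longrightarrow> PhiOK u" by (rule iv9)
  have c10: "0.298 \<le> u \<Longrightarrow> u \<le> 0.319 \<Longrightarrow> PhiOK u" by (rule iv10)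
  have c11: "0.319 \<le> u \<Longrightarrow> u \<le> 0.34 \<Longrightarrow> PhiOK u" by (rule iv11)
  have c12: "0.34 \<le> u \<Longrightarrow> u \<le> 0.362 \<Longrightarrow> PhiOK u" by (rule iv12)
  have c13: "0.362 \<le> u \<Longrightarrow> u \<le> 0.386 \<Longrightarrow> PhiOK u" by (rule iv13)
  have c14: "0.386 \<le> u \<Longrightarrow> u \<le> 0.412 \<Longrightarrow> PhiOK u" by (rule iv14)
  have c15: "0.412 \<le> u \<Longrightarrow> u \<le> 0.44 \<Longrightarrow> PhiOK u" by (rule iv15)
  have c16: "0.44 \<le> u \<Longrightarrow> u \<le> 0.472 \<Longrightarrow> PhiOK u" by (rule iv16)
  have c17: "0.472 \<le> u \<Longrightarrow> u \<le> 0.509 \<Longrightarrow> PhiOK u" by (rule iv17)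
  have c18: "0.509 \<le> u \<Longrightarrow> u \<le> 0.554 \<Longrightarrow> PhiOK u" by (rule iv18)
  have c19: "0.554 \<le> u \<Longrightarrow> u \<le> 0.61 \<Longrightarrow> PhiOK u" by (rule iv19)
  have c20: "0.61 \<le> u \<Longrightarrow> u \<le> 0.683 \<Longrightarrow> PhiOK u" by (rule iv20)
  have c21: "0.683 \<le> u \<Longrightarrow> u \<le> 0.783 \<Longrightarrow> PhiOK u" by (rule iv21)
  have c22: "0.783 \<le> u \<Longrightarrow> u \<le> 0.933 \<Longrightarrow> PhiOK u" by (rule iv22)
  have c23: "0.933 \<le> u \<Longrightarrow> u \<le> 1.187 \<Longrightarrow> PhiOK u" by (rule iv23)
  have c24: "1.187 \<le> u \<Longrightarrow> u \<le> 1.713 \<Longrightarrow> PhiOK u" by (rule iv24)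
  have c25: "1.713 \<le> u \<Longrightarrow> u \<le> 2 \<Longrightarrow> PhiOK u" by (rule iv25)
  show ?thesis
  proof (cases "u \<le> 0.052")
    case True then show ?thesis using c0 u by linarith
  next
    case False then have "0.052 \<le> u" by linarith
    note ge1=this
  show ?thesis
  proof (cases "u \<le> 0.094")
    case True then show ?thesis using c1 ge1 u by linarith
  next
    case False then have "0.094 \<le> u" by linarith
    note ge2=this
  show ?thesis
  proof (cases "u \<le> 0.129")
    case True then show ?thesis using c2 ge2 u by linarith
  next
    case False then have "0.129 \<le> u" by linarith
    note ge3=this
  show ?thesis
  proof (cases "u \<le> 0.159")
    case True then show ?thesis using c3 ge3 u by linarith
  next
    case False then have "0.159 \<le> u" by linarith
    note ge4=this
  show ?thesis
  proof (cases "u \<le> 0.186")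
    case True then show ?thesis using c4 ge4 u by linarith
  next
    case False then have "0.186 \<le> u" by linarith
    note ge5=this
  show ?thesis
  proof (cases "u \<le> 0.211")
    case True then show ?thesis using c5 ge5 u by linarith
  next
    case False then have "0.211 \<le> u" by linarith
    note ge6=this
  show ?thesis
  proof (cases "u \<le> 0.234")
    case True then show ?thesis using c6 ge6 u by linarith
  next
    case False then have "0.234 \<le> u" by linarith
    note ge7=this
  show ?thesis
  proof (cases "u \<le> 0.256")
    case True then show ?thesis using c7 ge7 u by linarith
  next
    case False then have "0.256 \<le> u" by linarith
    note ge8=this
  show ?thesis
  proof (cases "u \<le> 0.277")
    case True then show ?thesis using c8 ge8 u by linarith
  next
    case False then have "0.277 \<le> u" by linarith
    note ge9=this
  show ?thesis
  proof (cases "u \<le> 0.298")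
    case True then show ?thesis using c9 ge9 u by linarith
  next
    case False then have "0.298 \<le> u" by linarith
    note ge10=this
  show ?thesis
  proof (cases "u \<le> 0.319")
    case True then show ?thesis using c10 ge10 u by linarith
  next
    case False then have "0.319 \<le> u" by linarith
    note ge11=this
  show ?thesis
  proof (cases "u \<le> 0.34")
    case True then show ?thesis using c11 ge11 u by linarith
  next
    case False then have "0.34 \<le> u" by linarith
    note ge12=this
  show ?thesis
  proof (cases "u \<le> 0.362")
    case True then show ?thesis using c12 ge12 u by linarith
  next
    case False then have "0.362 \<le> u" by linarith
    note ge13=this
  show ?thesis
  proof (cases "u \<le> 0.386")
    case True then show ?thesis using c13 ge13 u by linarith
  next
    case False then have "0.386 \<le> u" by linarith
    note ge14=this
  show ?thesis
  proof (cases "u \<le> 0.412")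
    case True then show ?thesis using c14 ge14 u by linarith
  next
    case False then have "0.412 \<le> u" by linarith
    note ge15=this
  show ?thesis
  proof (cases "u \<le> 0.44")
    case True then show ?thesis using c15 ge15 u by linarith
  next
    case False then have "0.44 \<le> u" by linarith
    note ge16=this
  show ?thesis
  proof (cases "u \<le> 0.472")
    case True then show ?thesis using c16 ge16 u by linarith
  next
    case False then have "0.472 \<le> u" by linarith
    note ge17=this
  show ?thesis
  proof (cases "u \<le> 0.509")
    case True then show ?thesis using c17 ge17 u by linarith
  next
    case False then have "0.509 \<le> u" by linarith
    note ge18=this
  show ?thesis
  proof (cases "u \<le> 0.554")
    case True then show ?thesis using c18 ge18 u by linarith
  next
    case False then have "0.554 \<le> u" by linarith
    note ge19=this
  show ?thesis
  proof (cases "u \<le> 0.61")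
    case True then show ?thesis using c19 ge19 u by linarith
  next
    case False then have "0.61 \<le> u" by linarith
    note ge20=this
  show ?thesis
  proof (cases "u \<le> 0.683")
    case True then show ?thesis using c20 ge20 u by linarith
  next
    case False then have "0.683 \<le> u" by linarith
    note ge21=this
  show ?thesis
  proof (cases "u \<le> 0.783")
    case True then show ?thesis using c21 ge21 u by linarith
  next
    case False then have "0.783 \<le> u" by linarith
    note ge22=this
  show ?thesis
  proof (cases "u \<le> 0.933")
    case True then show ?thesis using c22 ge22 u by linarith
  next
    case False then have "0.933 \<le> u" by linarith
    note ge23=this
  show ?thesis
  proof (cases "u \<le> 1.187")
    case True then show ?thesis using c23 ge23 u by linarith
  next
    case False then have "1.187 \<le> u" by linarith
    note ge24=this
  show ?thesis
  proof (cases "u \<le> 1.713")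
    case True then show ?thesis using c24 ge24 u by linarith
  next
    case False then have "1.713 \<le> u" by linarith
    note ge25=this
  show ?thesis using c25 ge25 u by linarith
  qed
  qed
  qed
  qed
  qed
  qed
  qed
  qed
  qed
  qed
  qed
  qed
  qed
  qed
  qed
  qed
  qed
  qed
  qed
  qed
  qed
  qed
  qed
  qed
  qed
qed

lemma PhiOK_all: "0 < u \<Longrightarrow> PhiOK u"
  using cover_all tail_ok by (cases "u \<le> 2") auto


lemma ln3_gt_1': "ln (3::real) > 1" by (rule ln3_gt_1)
definition gg :: "nat \<Rightarrow> real" where "gg n = ln (real n) / ((real n - 1) * (real n - 2))"
definition gt :: "real \<Rightarrow> real" where "gt x = ln x / (x - 2)^2"
definition Ph6 :: "real \<Rightarrow> real" where "Ph6 x = (ln x + 1) / (x - 2)"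

lemma Ph6_deriv: assumes "x > 2"
  shows "(Ph6 has_real_derivative - ((ln x + 2 / x) / (x - 2)^2)) (at x)"
proof -
  have n: "((\<lambda>x. ln x + 1) has_real_derivative 1/x) (at x)"
    using assms by (auto intro!: derivative_eq_intros)
  have d: "((\<lambda>x. x - 2) has_real_derivative 1) (at x)"
    by (auto intro!: derivative_eq_intros)
  have "(Ph6 has_real_derivative ((1/x) * (x - 2) - (ln x + 1) * 1) / ((x - 2) * (x - 2))) (at x)"
    unfolding Ph6_def using DERIV_divide[OF n d] assms by simp
  moreover have "((1/x) * (x - 2) - (ln x + 1) * 1) / ((x - 2) * (x - 2)) = - ((ln x + 2 / x) / (x - 2)^2)"
    using assms by (simp add: field_simps power2_eq_square) (simp add: minus_divide_left)
  ultimately show ?thesis by simp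
qed

lemma gt_anti: assumes "3 \<le> x" "x \<le> y" shows "gt y \<le> gt x"
proof -
  define r where "r = y / x"
  have x0: "x > 0" using assms by simp
  have r1: "r \<ge> 1" using assms by (simp add: r_def)
  have y: "y = x * r" using x0 by (simp add: r_def)
  have lx: "ln x \<ge> 1"
  proof -
    have "ln x \<ge> ln 3" using assms by simp
    then show ?thesis using ln3_gt_1' by simp
  qed
  have "ln y = ln x + ln r" using x0 r1 y by (simp add: ln_mult)
  also have "\<dots> \<le> ln x + ln x * (r - 1)"
  proof -
    have "ln r \<le> r - 1" using ln_le_minus_one[of r] r1 by simp
    moreover have "1 * (r - 1) \<le> ln x * (r - 1)" using lx r1 by (intro mult_right_mono) auto
    ultimately show ?thesis by simp
  qed
  also have "\<dots> = ln x * r" by (simp add: algebra_simps)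
  finally have ly: "ln y \<le> ln x * r" .
  have sq: "y * (x - 2)^2 \<le> x * (y - 2)^2"
  proof -
    have "x * (y - 2)^2 - y * (x - 2)^2 = (y - x) * (x * y - 4)"
      by (simp add: algebra_simps power2_eq_square)
    moreover have "0 \<le> (y - x) * (x * y - 4)"
    proof -
      have "x * y \<ge> 3 * 3" using assms by (intro mult_mono) auto
      then show ?thesis using assms by (intro mult_nonneg_nonneg) auto
    qed
    ultimately show ?thesis by linarith
  qed
  have p1: "(y - 2)^2 > 0" "(x - 2)^2 > 0" using assms by auto
  have "ln y * (x - 2)^2 \<le> ln x * r * (x - 2)^2" using ly p1 by (intro mult_right_mono) auto
  also have "\<dots> = ln x * (y * (x - 2)^2) / x" using x0 by (simp add: r_def)
  also have "\<dots> \<le> ln x * (x * (y - 2)^2) / x"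
  proof -
    have "ln x * (y * (x - 2)^2) \<le> ln x * (x * (y - 2)^2)" using sq lx by (intro mult_left_mono) auto
    then show ?thesis using x0 by (intro divide_right_mono) auto
  qed
  also have "\<dots> = ln x * (y - 2)^2" using x0 by simp
  finally have "ln y * (x - 2)^2 \<le> ln x * (y - 2)^2" .
  then show ?thesis unfolding gt_def using p1 by (simp add: divide_simps mult.commute)
qed

lemma gg_le_gt: assumes "n \<ge> 3" shows "gg n \<le> gt (real n)"
proof -
  have "(real n - 2)^2 \<le> (real n - 1) * (real n - 2)" using assms by (simp add: power2_eq_square)
  moreover have "0 < (real n - 2)^2" using assms by simp
  moreover have "0 \<le> ln (real n)" using assms by simp
  moreover have "0 < (real n - 1) * (real n - 2) * (real n - 2)^2"
    using assms by (intro mult_pos_pos) auto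
  ultimately show ?thesis unfolding gg_def gt_def by (intro divide_left_mono) auto
qed

lemma pair_step: assumes "j \<ge> 1"
  shows "gg (6*j+5) + gg (6*j+7) \<le> Ph6 (6*real j - 1)/3 - Ph6 (6*real (Suc j) - 1)/3"
proof -
  define a where "a = 6 * real j - 1"
  have a5: "a \<ge> 5" using assms by (simp add: a_def)
  obtain z where z: "a < z" "z < a + 6" "Ph6 (a+6) - Ph6 a = ((a+6) - a) * (- ((ln z + 2 / z) / (z - 2)^2))"
    using MVT2[of a "a+6" Ph6 "\<lambda>x. - ((ln x + 2 / x) / (x - 2)^2)"] Ph6_deriv a5 by force
  have "gt (a + 6) \<le> gt z" using z a5 by (intro gt_anti) auto
  also have "gt z \<le> (ln z + 2 / z) / (z - 2)^2"
    unfolding gt_def using z a5 by (intro divide_right_mono) auto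
  finally have A: "gt (a+6) \<le> (ln z + 2 / z) / (z - 2)^2" .
  have r5: "real (6*j+5) = a + 6" by (simp add: a_def)
  have r7: "real (6*j+7) = a + 8" by (simp add: a_def)
  have "gg (6*j+5) \<le> gt (real (6*j+5))" by (rule gg_le_gt) simp
  then have "gg (6*j+5) \<le> gt (a+6)" by (simp only: r5)
  moreover have "gg (6*j+7) \<le> gt (real (6*j+7))" by (rule gg_le_gt) simp
  then have "gg (6*j+7) \<le> gt (a+8)" by (simp only: r7)
  moreover have "gt (a+8) \<le> gt (a+6)" using a5 by (intro gt_anti) auto
  ultimately have "gg (6*j+5) + gg (6*j+7) \<le> 2 * ((ln z + 2 / z) / (z - 2)^2)" using A by linarith
  also have "\<dots> = (Ph6 a - Ph6 (a+6)) / 3" using z by simp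
  finally show ?thesis by (simp add: a_def algebra_simps)
qed

lemma gg_nonneg: "0 \<le> gg n"
proof (cases "n \<ge> 2")
  case True then show ?thesis unfolding gg_def
    by (intro divide_nonneg_nonneg mult_nonneg_nonneg) auto
next
  case False then have "n = 0 \<or> n = 1" by auto
  then show ?thesis by (auto simp: gg_def)
qed

lemma Ph6_nonneg: "x \<ge> 3 \<Longrightarrow> 0 \<le> Ph6 x"
  unfolding Ph6_def by (intro divide_nonneg_nonneg) auto

lemma m6: "\<not> 2 dvd (p::nat) \<Longrightarrow> \<not> 3 dvd p \<Longrightarrow> p mod 6 = 1 \<or> p mod 6 = 5"
  by presburger
lemma m6b: "(p::nat) mod 6 = 1 \<Longrightarrow> p \<ge> 5 \<Longrightarrow> p = 6 * (p div 6 - 1) + 7"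
  by presburger
lemma m6c: "(p::nat) mod 6 = 5 \<Longrightarrow> p = 6 * (p div 6) + 5"
  by presburger

lemma prime_mod6:
  assumes "prime (p::nat)" "p \<ge> 5"
  shows "(\<exists>j. p = 6*j+5) \<or> (\<exists>j. p = 6*j+7)"
proof -
  have d2: "\<not> 2 dvd p"
  proof
    assume "2 dvd p" then have "2 = p" using primes_dvd_imp_eq[of 2 p] assms(1) by simp
    then show False using assms(2) by simp
  qed
  have d3: "\<not> 3 dvd p"
  proof
    assume "3 dvd p" then have "3 = p" using primes_dvd_imp_eq[of 3 p] assms(1) by simp
    then show False using assms(2) by simp
  qed
  have "p mod 6 = 1 \<or> p mod 6 = 5" using m6[OF d2 d3] .
  then show ?thesis
  proof
    assume "p mod 6 = 5" then have "p = 6 * (p div 6) + 5" using m6c by blast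
    then show ?thesis by blast
  next
    assume h: "p mod 6 = 1" then have "p = 6 * (p div 6 - 1) + 7" using m6b assms(2) by blast
    then show ?thesis by blast
  qed
qed

lemma head_num:
  "gg 5 + gg 7 + gg 11 + gg 13 + gg 17 + gg 19 + gg 23 + gg 25 + gg 29 + gg 31 + Ph6 29 / 3 \<le> 0.3416"
proof -
  have l25: "ln (25::real) = 2 * ln 5"
    using ln_realpow[of 5 2] by simp
  have "gg 5 + gg 7 + gg 11 + gg 13 + gg 17 + gg 19 + gg 23 + gg 25 + gg 29 + gg 31 + Ph6 29 / 3
    = ln 5 / 12 + ln 7 / 30 + ln 11 / 90 + ln 13 / 132 + ln 17 / 240 + ln 19 / 306 + ln 23 / 462
      + 2 * ln 5 / 552 + ln 29 / 756 + ln 31 / 870 + (ln 29 + 1) / 81"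
    by (simp add: gg_def Ph6_def l25)
  also have "\<dots> \<le> 0.3416"
    using ln5_up ln7_up ln11_up ln13_up ln17_up ln19_up ln23_up ln29_up ln31_up
    by (simp add: field_simps)
  finally show ?thesis .
qed

lemma R_bound:
  assumes "finite F" "\<forall>p\<in>F. prime p \<and> p \<ge> 5"
  shows "(\<Sum>p\<in>F. gg p) \<le> 0.3416"
proof -
  define M where "M = Suc (Max (insert 0 F))"
  define A where "A = (\<lambda>j. 6*j+5) ` {..<M}"
  define B where "B = (\<lambda>j. 6*j+7) ` {..<M}"
  have M5: "M \<ge> 1" by (simp add: M_def)
  have sub: "F \<subseteq> A \<union> B"
  proof
    fix p assume pF: "p \<in> F"
    have pM: "p < M" using pF assms(1) unfolding M_def by (simp add: le_imp_less_Suc)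
    have "(\<exists>j. p = 6*j+5) \<or> (\<exists>j. p = 6*j+7)" using prime_mod6[of p] pF assms(2) by auto
    then show "p \<in> A \<union> B"
    proof (elim disjE exE)
      fix j assume "p = 6*j+5" then show ?thesis using pM by (auto simp: A_def)
    next
      fix j assume "p = 6*j+7" then show ?thesis using pM by (auto simp: B_def)
    qed
  qed
  have "(\<Sum>p\<in>F. gg p) \<le> (\<Sum>p\<in>A \<union> B. gg p)"
    by (intro sum_mono2 sub) (auto simp: A_def B_def gg_nonneg)
  also have "\<dots> \<le> (\<Sum>p\<in>A. gg p) + (\<Sum>p\<in>B. gg p)"
  proof -
    have "sum gg (A \<union> B) = sum gg A + sum gg B - sum gg (A \<inter> B)"
      by (rule sum_Un) (auto simp: A_def B_def)
    moreover have "0 \<le> sum gg (A \<inter> B)" by (rule sum_nonneg) (simp add: gg_nonneg)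
    ultimately show ?thesis by simp
  qed
  also have "\<dots> = (\<Sum>j<M. gg (6*j+5) + gg (6*j+7))"
  proof -
    have "(\<Sum>p\<in>A. gg p) = (\<Sum>j<M. gg (6*j+5))"
      unfolding A_def by (subst sum.reindex) (auto simp: inj_on_def)
    moreover have "(\<Sum>p\<in>B. gg p) = (\<Sum>j<M. gg (6*j+7))"
      unfolding B_def by (subst sum.reindex) (auto simp: inj_on_def)
    ultimately show ?thesis by (simp add: sum.distrib)
  qed
  also have "\<dots> \<le> (\<Sum>j<M+5. gg (6*j+5) + gg (6*j+7))"
    by (intro sum_mono2) (auto simp: gg_nonneg add_nonneg_nonneg)
  also have "\<dots> \<le> (\<Sum>j<5. gg (6*j+5) + gg (6*j+7)) + Ph6 (6*real 5 - 1)/3 - Ph6 (6*real (M+5) - 1)/3"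
    using tele_le[of 5 "\<lambda>j. gg (6*j+5) + gg (6*j+7)" "\<lambda>j. Ph6 (6*real j - 1)/3" "M+5"] pair_step
    by simp
  also have "\<dots> \<le> (\<Sum>j<5. gg (6*j+5) + gg (6*j+7)) + Ph6 29/3"
  proof -
    have "0 \<le> Ph6 (6*real (M+5) - 1)" by (rule Ph6_nonneg) simp
    then show ?thesis by simp
  qed
  also have "(\<Sum>j<5. gg (6*j+5) + gg (6*j+7)) = gg 5 + gg 7 + gg 11 + gg 13 + gg 17 + gg 19 + gg 23 + gg 25 + gg 29 + gg 31"
    by (simp add: numeral_eq_Suc)
  also have "gg 5 + gg 7 + gg 11 + gg 13 + gg 17 + gg 19 + gg 23 + gg 25 + gg 29 + gg 31 + Ph6 29 / 3 \<le> 0.3416"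
    by (rule head_num)
  finally show ?thesis .
qed

lemma geo_sum: "(\<Sum>k\<in>{1..K}. (q::real) ^ k) = q * (\<Sum>k<K. q ^ k)"
  by (induction K) (simp_all add: atLeastAtMostSuc_conv algebra_simps)

lemma geo_lim:
  assumes P: "P > 1" and u: "u > 0"
  shows "(\<lambda>K. \<Sum>k\<in>{1..K}. ln P * ww u P ^ k) \<longlonglongrightarrow> ln P / (P powr (1+u) - 1)"
proof -
  define X where "X = P powr (1+u)"
  have X1: "X > 1" unfolding X_def using P u by (intro gr_one_powr) auto
  define q where "q = ww u P"
  have "q = P powr (-(1+u))" unfolding q_def ww_def
    by (rule arg_cong[where f="\<lambda>e. P powr e"]) simp
  also have "\<dots> = inverse (P powr (1+u))" by (rule powr_minus)
  also have "\<dots> = 1 / X" unfolding X_def by (simp add: divide_inverse)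
  finally have q: "q = 1 / X" .
  have q0: "0 < q" "q < 1" using X1 q by auto
  have "(\<lambda>n. q ^ n) sums (1 / (1 - q))" using q0 by (intro geometric_sums) auto
  then have "(\<lambda>K. \<Sum>k<K. q ^ k) \<longlonglongrightarrow> 1 / (1 - q)" by (simp add: sums_def)
  then have "(\<lambda>K. ln P * q * (\<Sum>k<K. q ^ k)) \<longlonglongrightarrow> ln P * q * (1 / (1 - q))"
    by (intro tendsto_mult_left)
  moreover have "(\<Sum>k\<in>{1..K}. ln P * ww u P ^ k) = ln P * q * (\<Sum>k<K. q ^ k)" for K
    using geo_sum[where q="ww u P" and K=K] by (simp add: q_def sum_distrib_left[symmetric] mult.assoc)
  moreover have "ln P * q * (1 / (1 - q)) = ln P / (P powr (1+u) - 1)"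
    using X1 by (simp add: q X_def[symmetric] field_simps)
  ultimately show ?thesis by simp
qed

lemma fiber_limit:
  assumes u: "u > 0" and F: "finite F" "\<forall>p\<in>F. prime p \<and> p \<ge> 3"
  shows "(\<Sum>p\<in>F. ln (real p) / (real p powr (1+u) - 1)) * suminf (zt u) \<le> suminf (lt u)"
proof -
  define c where "c K = (\<Sum>p\<in>F. \<Sum>k\<in>{1..K}. ln (real p) * ww u (real p) ^ k)" for K
  have cK: "c K * suminf (zt u) \<le> suminf (lt u)" for K
  proof -
    have "(\<lambda>J. c K * sum (zt u) {..<J}) \<longlonglongrightarrow> c K * suminf (zt u)"
      using summable_LIMSEQ[OF summable_zt[OF u]] by (intro tendsto_mult_left)
    moreover have "\<forall>J. c K * sum (zt u) {..<J} \<le> suminf (lt u)"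
      using fiber_finite[OF u F] by (simp add: c_def)
    ultimately show ?thesis using LIMSEQ_le_const2[of "\<lambda>J. c K * sum (zt u) {..<J}"] by blast
  qed
  have "(\<lambda>K. c K) \<longlonglongrightarrow> (\<Sum>p\<in>F. ln (real p) / (real p powr (1+u) - 1))"
    unfolding c_def
  proof (rule tendsto_sum)
    fix p assume "p \<in> F"
    then have "real p > 1" using F by auto
    then show "(\<lambda>K. \<Sum>k\<in>{1..K}. ln (real p) * ww u (real p) ^ k) \<longlonglongrightarrow> ln (real p) / (real p powr (1+u) - 1)"
      using geo_lim u by blast
  qed
  then have "(\<lambda>K. c K * suminf (zt u)) \<longlonglongrightarrow> (\<Sum>p\<in>F. ln (real p) / (real p powr (1+u) - 1)) * suminf (zt u)"
    by (intro tendsto_mult_right)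
  then show ?thesis using LIMSEQ_le_const2[of "\<lambda>K. c K * suminf (zt u)"] cK by blast
qed

lemma key_ineq:
  fixes x y P :: real
  assumes "1 \<le> y" "y \<le> x" "3 \<le> P"
  shows "(2*x-1)/(x*(P*x-1)) \<le> (2*y-1)/((P-1)*y^2)"
proof -
  have y0: "y > 0" "x > 0" using assms by auto
  have d1: "P*y - 1 > 0" "P*x - 1 > 0"
  proof -
    have "P * y \<ge> 3 * 1" using assms by (intro mult_mono) auto
    moreover have "P * x \<ge> 3 * 1" using assms by (intro mult_mono) auto
    ultimately show "P*y - 1 > 0" "P*x - 1 > 0" by auto
  qed
  have "(2*y-1) * (x*(P*x-1)) - (2*x-1) * (y*(P*y-1)) = (x - y) * (P * (x*(y-1) + y*(x-1)) + 1)"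
    by (simp add: algebra_simps)
  moreover have "0 \<le> (x - y) * (P * (x*(y-1) + y*(x-1)) + 1)"
    using assms y0 by (intro mult_nonneg_nonneg add_nonneg_nonneg) auto
  ultimately have s1: "(2*x-1) * (y*(P*y-1)) \<le> (2*y-1) * (x*(P*x-1))" by linarith
  have A: "(2*x-1)/(x*(P*x-1)) \<le> (2*y-1)/(y*(P*y-1))"
    using s1 y0 d1 by (simp add: divide_simps mult.commute mult.left_commute)
  have "(P-1)*y^2 \<le> y*(P*y-1)"
  proof -
    have "y*(P*y-1) - (P-1)*y^2 = y * (y - 1)" by (simp add: algebra_simps power2_eq_square)
    moreover have "0 \<le> y * (y - 1)" using assms by simp
    ultimately show ?thesis by linarith
  qed
  moreover have "0 < (P-1)*y^2" using assms y0 by simp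
  moreover have "0 \<le> 2*y-1" using assms by simp
  ultimately have B: "(2*y-1)/(y*(P*y-1)) \<le> (2*y-1)/((P-1)*y^2)"
    by (intro divide_left_mono) (auto intro: mult_pos_pos)
  show ?thesis using A B by linarith
qed

lemma D_formula:
  fixes P u :: real
  assumes "3 \<le> P" "0 \<le> u"
  shows "ln P / ((P - 2) * P powr u) - ln P / (P powr (1+u) - 1)
       = ln P * (2 * P powr u - 1) / ((P - 2) * P powr u * (P * P powr u - 1))"
proof -
  define x where "x = P powr u"
  have x1: "x \<ge> 1" unfolding x_def using assms by (intro ge_one_powr_ge_zero) auto
  have e: "P powr (1+u) = P * x" unfolding x_def using assms by (simp add: powr_add)
  have d: "P * x - 1 > 0"
  proof -
    have "P * x \<ge> 3 * 1" using assms x1 by (intro mult_mono) auto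
    then show ?thesis by simp
  qed
  have "P - 2 > 0" using assms by simp
  then show ?thesis unfolding e x_def[symmetric] using x1 d
    by (simp add: field_simps)
qed

lemma D3:
  fixes u :: real assumes "0 \<le> u"
  shows "ln 3 / ((3 - 2) * 3 powr u) - ln 3 / (3 powr (1+u) - 1)
       = ln 3 * (3 powr (-u) * (2 - 3 powr (-u)) / (3 - 3 powr (-u)))"
proof -
  define x where "x = (3::real) powr u"
  have x1: "x \<ge> 1" unfolding x_def using assms by (intro ge_one_powr_ge_zero) auto
  have t: "(3::real) powr (-u) = 1 / x" unfolding x_def by (simp add: powr_minus divide_inverse)
  have d: "3 * x - 1 > 0" using x1 by simp
  have d2: "3 - 1 / x > 0" using x1 by (simp add: field_simps)
  have "ln 3 / ((3 - 2) * 3 powr u) - ln 3 / (3 powr (1+u) - 1)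
       = ln 3 * (2 * x - 1) / ((3 - 2) * x * (3 * x - 1))"
    using D_formula[of 3 u] assms by (simp add: x_def)
  also have "\<dots> = ln 3 * ((1/x) * (2 - 1/x) / (3 - 1/x))"
    using x1 d d2 by (simp add: field_simps)
  finally show ?thesis by (simp add: t)
qed

lemma D5:
  fixes u :: real and p :: nat
  assumes "0 \<le> u" "p \<ge> 5"
  shows "ln (real p) / ((real p - 2) * real p powr u) - ln (real p) / (real p powr (1+u) - 1)
       \<le> gg p * (2 * 3 powr (-u) - (3 powr (-u))^2)"
proof -
  define x where "x = real p powr u"
  define y where "y = (3::real) powr u"
  have y1: "y \<ge> 1" unfolding y_def using assms by (intro ge_one_powr_ge_zero) auto
  have yx: "y \<le> x" unfolding x_def y_def using assms by (intro powr_mono2) auto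
  have P3: "real p \<ge> 3" using assms by simp
  have t: "(3::real) powr (-u) = 1 / y" unfolding y_def by (simp add: powr_minus divide_inverse)
  have "ln (real p) / ((real p - 2) * real p powr u) - ln (real p) / (real p powr (1+u) - 1)
      = (ln p / (real p - 2)) * ((2*x-1)/(x*(p*x-1)))"
    using D_formula[OF P3 assms(1)] by (simp add: x_def)
  also have "\<dots> \<le> (ln p / (real p - 2)) * ((2*y-1)/((real p-1)*y^2))"
    using key_ineq[OF y1 yx P3] P3 by (intro mult_left_mono) auto
  also have "\<dots> = gg p * ((2*y-1)/y^2)"
    unfolding gg_def using P3 y1 by (simp add: field_simps)
  also have "(2*y-1)/y^2 = 2 * (1/y) - (1/y)^2"
    using y1 by (simp add: field_simps power2_eq_square)
  finally show ?thesis by (simp add: t)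
qed


lemma D_sum:
  assumes u: "u > 0" and F: "finite F" "\<forall>p\<in>F. prime p \<and> p \<ge> 3"
  shows "(\<Sum>p\<in>F. ln (real p) / ((real p - 2) * real p powr u) - ln (real p) / (real p powr (1+u) - 1))
     \<le> ln 3 * (3 powr (-u) * (2 - 3 powr (-u)) / (3 - 3 powr (-u))) + 0.3416 * (2 * 3 powr (-u) - (3 powr (-u))^2)"
proof -
  define t where "t = (3::real) powr (-u)"
  define D where "D p = ln (real p) / ((real p - 2) * real p powr u) - ln (real p) / (real p powr (1+u) - 1)" for p :: nat
  have t0: "0 < t" "t \<le> 1"
  proof -
    show "0 < t" by (simp add: t_def)
    have "t \<le> 3 powr 0" unfolding t_def using u by (intro powr_mono) auto
    then show "t \<le> 1" by simp
  qed
  have w0: "0 \<le> 2 * t - t^2"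
  proof -
    have "0 \<le> t * (2 - t)" using t0 by simp
    then show ?thesis by (simp add: algebra_simps power2_eq_square)
  qed
  have q0: "0 \<le> t * (2 - t) / (3 - t)" using t0 by simp
  have D3v: "D 3 = ln 3 * (t * (2 - t) / (3 - t))"
    using D3[of u] u by (simp add: D_def t_def)
  have S1: "(\<Sum>p\<in>F \<inter> {3}. D p) \<le> ln 3 * (t * (2 - t) / (3 - t))"
  proof (cases "3 \<in> F")
    case True
    then have "F \<inter> {3} = {3}" by auto
    then show ?thesis using D3v by simp
  next
    case False
    then have "F \<inter> {3} = {}" by auto
    moreover have "0 \<le> ln 3 * (t * (2 - t) / (3 - t))" using q0 by (intro mult_nonneg_nonneg) auto
    ultimately show ?thesis by simp
  qed
  have F5: "\<forall>p\<in>F - {3}. prime p \<and> p \<ge> 5"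
  proof
    fix p assume p: "p \<in> F - {3}"
    then have pp: "prime p" "p \<ge> 3" "p \<noteq> 3" using F by auto
    then have "odd p" using prime_odd_nat[of p] by simp
    then have "p \<noteq> 4" by auto
    then show "prime p \<and> p \<ge> 5" using pp by simp
  qed
  have S2: "(\<Sum>p\<in>F - {3}. D p) \<le> 0.3416 * (2 * t - t^2)"
  proof -
    have "(\<Sum>p\<in>F - {3}. D p) \<le> (\<Sum>p\<in>F - {3}. gg p * (2 * t - t^2))"
    proof (rule sum_mono)
      fix p assume "p \<in> F - {3}"
      then have "p \<ge> 5" using F5 by auto
      then show "D p \<le> gg p * (2 * t - t^2)" using D5[of u p] u by (simp add: D_def t_def)
    qed
    also have "\<dots> = (\<Sum>p\<in>F - {3}. gg p) * (2 * t - t^2)" by (simp add: sum_distrib_right)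
    also have "\<dots> \<le> 0.3416 * (2 * t - t^2)"
      using R_bound[of "F - {3}"] F F5 w0 by (intro mult_right_mono) auto
    finally show ?thesis .
  qed
  have "(\<Sum>p\<in>F. D p) = (\<Sum>p\<in>F \<inter> {3}. D p) + (\<Sum>p\<in>F - {3}. D p)"
    using F(1) by (rule sum.Int_Diff)
  then have "(\<Sum>p\<in>F. D p) \<le> ln 3 * (t * (2 - t) / (3 - t)) + 0.3416 * (2 * t - t^2)"
    using S1 S2 by linarith
  then show ?thesis by (simp add: D_def t_def)
qed

lemma finite_bound:
  assumes u: "u > 0" and F: "finite F" "F \<subseteq> {p::nat. prime p \<and> p \<ge> 3}"
  shows "u * (\<Sum>p\<in>F. ln (real p) / ((real p - 2) * real p powr u)) \<le> 1"
proof -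
  define t where "t = (3::real) powr (-u)"
  define Z where "Z = suminf (zt u)"
  define L where "L = suminf (lt u)"
  define A where "A p = ln (real p) / (real p powr (1+u) - 1)" for p :: nat
  define f where "f p = ln (real p) / ((real p - 2) * real p powr u)" for p :: nat
  define Glow where "Glow = 1 + (t/3) * (1 - u * ln 3) - t * ln 5 / 2"
  define Dup where "Dup = ln 3 * (t * (2 - t) / (3 - t)) + 0.3416 * (2 * t - t^2)"
  have Fp: "\<forall>p\<in>F. prime p \<and> p \<ge> 3" using F by auto
  have t0: "0 < t" "t \<le> 1"
  proof -
    show "0 < t" by (simp add: t_def)
    have "t \<le> 3 powr 0" unfolding t_def using u by (intro powr_mono) auto
    then show "t \<le> 1" by simp
  qed
  have Z1: "1 \<le> Z"
  proof -
    have "sum (zt u) {..<1} \<le> Z"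
      unfolding Z_def using summable_zt[OF u] by (intro sum_le_suminf) (auto simp: zt_nonneg)
    then show ?thesis by (simp add: zt_def ww_def)
  qed
  have fib: "(\<Sum>p\<in>F. A p) * Z \<le> L"
    using fiber_limit[OF u F(1) Fp] by (simp add: A_def Z_def L_def)
  have G: "Z - u * L \<ge> Glow" using G_lo[OF u] by (simp add: Z_def L_def Glow_def t_def)
  have Zu: "Z \<le> 1 + t/3 + t/(2*u)" using Z_up[OF u] by (simp add: Z_def t_def)
  have Phi: "(u + u*t/3 + t/2) * Dup \<le> Glow"
    using PhiOK_all[OF u] by (simp add: PhiOK_def Dup_def Glow_def t_def)
  have Ds: "(\<Sum>p\<in>F. f p - A p) \<le> Dup"
    using D_sum[OF u F(1) Fp] by (simp add: f_def A_def Dup_def t_def)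
  have Dup0: "0 \<le> Dup"
  proof -
    have "0 \<le> t * (2 - t)" using t0 by simp
    then have "0 \<le> 2 * t - t^2" by (simp add: algebra_simps power2_eq_square)
    moreover have "0 \<le> ln 3 * (t * (2 - t) / (3 - t))" using t0 by simp
    ultimately show ?thesis unfolding Dup_def by simp
  qed
  have split: "(\<Sum>p\<in>F. f p) = (\<Sum>p\<in>F. A p) + (\<Sum>p\<in>F. f p - A p)"
    by (simp add: sum_subtractf)
  have e1: "u * (\<Sum>p\<in>F. A p) * Z \<le> u * L"
    using fib u by (simp add: mult.assoc mult_left_mono)
  have e3: "u * (\<Sum>p\<in>F. f p - A p) * Z \<le> u * Dup * Z"
    using Ds u Z1 by (intro mult_right_mono mult_left_mono) auto
  have e4: "u * Dup * Z \<le> u * Dup * (1 + t/3 + t/(2*u))"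
    using Zu u Dup0 by (intro mult_left_mono) auto
  have e5: "u * Dup * (1 + t/3 + t/(2*u)) = (u + u*t/3 + t/2) * Dup"
    using u by (simp add: field_simps)
  have "u * (\<Sum>p\<in>F. f p) * Z = u * (\<Sum>p\<in>F. A p) * Z + u * (\<Sum>p\<in>F. f p - A p) * Z"
    unfolding split by (simp add: algebra_simps)
  also have "\<dots> \<le> u * L + Glow" using e1 e3 e4 e5 Phi by linarith
  also have "\<dots> \<le> Z" using G by linarith
  finally have "u * (\<Sum>p\<in>F. f p) * Z \<le> 1 * Z" by simp
  then have "u * (\<Sum>p\<in>F. f p) \<le> 1" using Z1 by (simp add: mult_le_cancel_right)
  then show ?thesis by (simp add: f_def)
qed

theorem lemma3p4:
  fixes u :: real
  assumes "u > 0"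
  shows "(\<lambda>p. ln (real p) / ((real p - 2) * real p powr u)) summable_on {p::nat. prime p \<and> p \<ge> 3}
     \<and> u * (\<Sum>\<^sub>\<infinity>p\<in>{p::nat. prime p \<and> p \<ge> 3}. ln (real p) / ((real p - 2) * real p powr u)) \<le> 1"
proof -
  define f where "f p = ln (real p) / ((real p - 2) * real p powr u)" for p :: nat
  define A where "A = {p::nat. prime p \<and> p \<ge> 3}"
  have nn: "0 \<le> f p" if "p \<in> A" for p
  proof -
    have "real p \<ge> 3" using that by (simp add: A_def)
    then show ?thesis unfolding f_def by (intro divide_nonneg_nonneg mult_nonneg_nonneg) auto
  qed
  have fb: "sum f F \<le> 1 / u" if "finite F" "F \<subseteq> A" for F
  proof -
    have "u * sum f F \<le> 1" using finite_bound[OF assms that(1)] that(2) by (simp add: f_def A_def)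
    then show ?thesis using assms by (simp add: field_simps mult.commute)
  qed
  have summ: "f summable_on A"
  proof (rule nonneg_bdd_above_summable_on)
    show "\<And>x. x \<in> A \<Longrightarrow> 0 \<le> f x" by (rule nn)
    show "bdd_above (sum f ` {F. F \<subseteq> A \<and> finite F})"
      using fb by (intro bdd_aboveI[where M="1/u"]) auto
  qed
  have "infsum f A \<le> 1 / u" by (rule infsum_le_finite_sums[OF summ fb])
  then have "u * infsum f A \<le> 1" using assms by (simp add: field_simps mult.commute)
  then show ?thesis using summ unfolding f_def A_def by simp
qed


end
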